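(* Let $n\ge 5$ and $t\ge 0$ be integers, and let $G$ be a cactus with $n$ vertices and exactly $t$ cycles. Then $$SO(G)\le (n-2t-1)\sqrt{(n-1)^{2}+1}+2t\sqrt{(n-1)^{2}+4}+2\sqrt{2}\,t,$$ with equality if and only if $G\cong H(n,t)$.
   Context: All graphs are finite, simple and connected. For a graph $G$, $d_u$ denotes the degree of vertex $u$, and the Sombor index is $SO(G)=\sum_{uv\in E(G)}\sqrt{d_u^2+d_v^2}$. A cactus is a connected graph in which any two cycles have at most one common vertex. For integers $n,t$ with $n\ge 2t+1$, $H(n,t)$ denotes the graph obtained from the star $K_{1,n-1}$ with center $c$ by adding $t$ pairwise disjoint edges among its leaves; equivalently, it consists of $t$ triangles sharing the single common vertex $c$, together with $n-2t-1$ pendant vertices attached to $c$. *)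

theory Defs
  imports Complex_Main
begin

definition simple_graph :: "'a set \<Rightarrow> 'a set set \<Rightarrow> bool" where
  "simple_graph V E \<longleftrightarrow> finite V \<and> (\<forall>e\<in>E. e \<subseteq> V \<and> card e = 2)"

definition adj :: "'a set set \<Rightarrow> 'a \<Rightarrow> 'a \<Rightarrow> bool" where
  "adj E u v \<longleftrightarrow> {u, v} \<in> E"

definition connected_graph :: "'a set \<Rightarrow> 'a set set \<Rightarrow> bool" where
  "connected_graph V E \<longleftrightarrow> V \<noteq> {} \<and> (\<forall>u\<in>V. \<forall>v\<in>V. (adj E)\<^sup>*\<^sup>* u v)"

definition degree :: "'a set set \<Rightarrow> 'a \<Rightarrow> nat" where
  "degree E u = card {e \<in> E. u \<in> e}"

definition sombor :: "'a set set \<Rightarrow> real" where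
  "sombor E = (\<Sum>e\<in>E. sqrt (\<Sum>u\<in>e. (real (degree E u))\<^sup>2))"

definition is_cycle :: "'a set set \<Rightarrow> 'a set set \<Rightarrow> bool" where
  "is_cycle E C \<longleftrightarrow> (\<exists>vs. length vs \<ge> 3 \<and> distinct vs \<and>
      C = {{vs ! i, vs ! ((i + 1) mod length vs)} | i. i < length vs} \<and> C \<subseteq> E)"

definition cycles :: "'a set set \<Rightarrow> 'a set set set" where
  "cycles E = {C. is_cycle E C}"

definition cactus :: "'a set \<Rightarrow> 'a set set \<Rightarrow> bool" where
  "cactus V E \<longleftrightarrow> simple_graph V E \<and> connected_graph V E \<and>
     (\<forall>C1\<in>cycles E. \<forall>C2\<in>cycles E. C1 \<noteq> C2 \<longrightarrow> card (\<Union>C1 \<inter> \<Union>C2) \<le> 1)"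

definition graph_iso :: "'a set \<Rightarrow> 'a set set \<Rightarrow> 'b set \<Rightarrow> 'b set set \<Rightarrow> bool" where
  "graph_iso V E W F \<longleftrightarrow> (\<exists>f. bij_betw f V W \<and>
      (\<forall>u\<in>V. \<forall>v\<in>V. {u, v} \<in> E \<longleftrightarrow> {f u, f v} \<in> F))"

text \<open>H(n,t): vertices 0..n-1, centre 0, star edges {0,i}, plus the t disjoint
  leaf edges {2j-1, 2j} for j = 1..t.\<close>
definition H_vertices :: "nat \<Rightarrow> nat set" where
  "H_vertices n = {0..<n}"

definition H_edges :: "nat \<Rightarrow> nat \<Rightarrow> nat set set" where
  "H_edges n t = {{0, i} | i. 1 \<le> i \<and> i < n} \<union> {{2*j - 1, 2*j} | j. 1 \<le> j \<and> j \<le> t}"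

end

theory Submission
  imports Defs
begin


lemma s8_lt3: "sqrt 8 < 3"
proof -
  have "sqrt 8 < sqrt (3^2)" by (rule real_sqrt_less_mono) simp
  then show ?thesis by simp
qed

lemma s8_gt2: "sqrt 8 > 2"
  by (rule real_less_rsqrt) simp

lemma s8_sq: "sqrt 8 * sqrt 8 = 8" by simp

lemma lin_bound:
  fixes a b :: real assumes "a \<ge> 2" "b \<ge> 2"
  shows "sqrt (a^2 + b^2) \<le> a + b - 4 + sqrt 8"
proof -
  have "a^2 + b^2 \<le> (a + b - 4 + sqrt 8)^2"
  proof -
    have "(a + b - 4 + sqrt 8)^2 - (a^2+b^2) = 2*(a - 2)*(b-2) + 2*(sqrt 8 - 2)*(a - 2) + 2*(sqrt 8 - 2)*(b-2)"
      using s8_sq by (simp add: power2_eq_square algebra_simps)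
    moreover have "2*(a - 2)*(b-2) + 2*(sqrt 8 - 2)*(a - 2) + 2*(sqrt 8 - 2)*(b-2) \<ge> 0"
      using assms s8_gt2 by (intro add_nonneg_nonneg mult_nonneg_nonneg) auto
    ultimately show ?thesis by linarith
  qed
  moreover have "a + b - 4 + sqrt 8 \<ge> 0" using assms s8_gt2 by linarith
  ultimately show ?thesis using real_le_lsqrt real_sqrt_le_mono
    by (metis real_sqrt_unique)
qed



definition ff :: "real \<Rightarrow> real \<Rightarrow> real" where "ff x y = sqrt (x^2 + y^2)"

lemma ff_sym: "ff x y = ff y x" by (simp add: ff_def add.commute)

lemma T1: fixes a b :: real assumes "a \<ge> 2" "b \<ge> 2"
  shows "ff a b \<le> ff (a+b-2) 2" and "(a-2)*(b-2) > 0 \<Longrightarrow> ff a b < ff (a+b-2) 2"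
proof -
  have e: "(a+b-2)^2 + 2^2 = a^2 + b^2 + 2*((a-2)*(b-2))" by (simp add: power2_eq_square algebra_simps)
  have "(a-2)*(b-2) \<ge> 0" using assms by simp
  then show "ff a b \<le> ff (a+b-2) 2" unfolding ff_def using e by simp
  show "(a-2)*(b-2) > 0 \<Longrightarrow> ff a b < ff (a+b-2) 2" unfolding ff_def using e by simp
qed

lemma T2: fixes a b c :: real assumes "a \<ge> 2" "b \<ge> 2" "c \<ge> 2"
  shows "ff a c + ff b c \<le> ff (a+b-2) c + ff 2 c"
proof -
  define L1 where "L1 = a^2 + c^2"
  define L2 where "L2 = b^2 + c^2"
  define R1 where "R1 = (a+b-2)^2 + c^2"
  define R2 where "R2 = 2^2 + c^2"
  define d where "d = (a-2)*(b-2)"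
  have d0: "d \<ge> 0" using assms by (simp add: d_def)
  have sumeq: "R1 + R2 = L1 + L2 + 2*d" by (simp add: L1_def L2_def R1_def R2_def d_def power2_eq_square algebra_simps)
  have prodeq: "R1*R2 - L1*L2 = d*(2*c^2 - a*b - 2*a - 2*b + 4)"
    unfolding L1_def L2_def R1_def R2_def d_def by algebra
  have nn: "L1 \<ge> 0" "L2 \<ge> 0" "R1 \<ge> 0" "R2 \<ge> 0" by (simp_all add: L1_def L2_def R1_def R2_def)
  have sR1: "sqrt R1 \<ge> a + b - 2"
    using assms by (simp add: R1_def real_le_rsqrt)
  have sR2: "sqrt R2 \<ge> 2"
    by (simp add: R2_def real_le_rsqrt)
  define P where "P = sqrt R1 * sqrt R2"
  have P0: "P \<ge> 2*a+2*b-4" unfolding P_def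
    using mult_mono[OF sR1 sR2] assms nn by (simp add: algebra_simps)
  have PP: "P*P = R1*R2"
  proof -
    have "P*P = (sqrt R1 * sqrt R1) * (sqrt R2 * sqrt R2)" unfolding P_def by (simp only: mult_ac)
    then show ?thesis using nn by simp
  qed
  have key: "L1*L2 \<le> (d + P)^2"
  proof -
    have h1: "(d+P)^2 = d*d + 2*d*P + P*P" by (simp add: power2_eq_square algebra_simps)
    have h2: "d*d + d*(2*c^2 - a*b - 2*a - 2*b + 4) = d*(2*c^2 - 4*a - 4*b + 8)"
      unfolding d_def by algebra
    have "(d+P)^2 - L1*L2 = d*(2*P + 2*c^2 - 4*a - 4*b + 8)"
      unfolding h1 PP using prodeq h2 by (simp add: algebra_simps)
    moreover have "2*P + 2*c^2 - 4*a - 4*b + 8 \<ge> 0" 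
    proof -
      have "c^2 \<ge> 0" by simp
      moreover have True by simp
      ultimately show ?thesis using P0 by linarith
    qed
    ultimately have "(d+P)^2 - L1*L2 \<ge> 0" using d0 by simp
    then show ?thesis by linarith
  qed
  have dP: "d + P \<ge> 0" using d0 P0 assms by linarith
  have m: "sqrt L1 * sqrt L2 \<le> d + P"
    unfolding real_sqrt_mult[symmetric] by (rule real_le_lsqrt[OF dP key])
  have q1: "(sqrt L1 + sqrt L2)^2 = L1 + L2 + 2*(sqrt L1 * sqrt L2)"
    using nn by (simp add: power2_sum)
  have q2: "(sqrt R1 + sqrt R2)^2 = R1 + R2 + 2*P"
    using nn by (simp add: power2_sum P_def)
  have "(sqrt L1 + sqrt L2)^2 \<le> (sqrt R1 + sqrt R2)^2"
    unfolding q1 q2 using m sumeq by linarith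
  then have "sqrt L1 + sqrt L2 \<le> sqrt R1 + sqrt R2"
    by (rule power2_le_imp_le) (use nn in simp)
  then show ?thesis by (simp add: ff_def L1_def L2_def R1_def R2_def)
qed



lemma ff_mono: assumes "0 \<le> x" "x \<le> x'" shows "ff x y \<le> ff x' y"
  unfolding ff_def using assms by (simp add: power_mono)

lemma ff_strict: assumes "0 \<le> x" "x < x'" shows "ff x y < ff x' y"
  unfolding ff_def using assms by (simp add: power_strict_mono)

lemma ff22: "ff 2 2 = sqrt 8" by (simp add: ff_def)

lemma tri_bound: fixes a b c :: real assumes "a \<ge> 2" "b \<ge> 2" "c \<ge> 2"
  shows "ff a b + ff b c + ff c a \<le> 2 * ff (a+b+c-4) 2 + sqrt 8"
    and "ff a b + ff b c + ff c a = 2 * ff (a+b+c-4) 2 + sqrt 8 \<Longrightarrow>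
         (a-2)*(b-2) = 0 \<and> (a+b-4)*(c-2) = 0"
proof -
  define p where "p = a+b-2"
  have p2: "p \<ge> 2" using assms by (simp add: p_def)
  have S1: "ff a b \<le> ff p 2" using T1(1)[OF assms(1,2)] by (simp add: p_def)
  have S1s: "(a-2)*(b-2) > 0 \<Longrightarrow> ff a b < ff p 2" using T1(2)[OF assms(1,2)] by (simp add: p_def)
  have S2: "ff c a + ff b c \<le> ff p c + ff 2 c" using T2[OF assms] by (simp add: p_def ff_sym)
  have S3: "ff p c \<le> ff (p+c-2) 2" using T1(1)[OF p2 assms(3)] .
  have S3s: "(p-2)*(c-2) > 0 \<Longrightarrow> ff p c < ff (p+c-2) 2" using T1(2)[OF p2 assms(3)] .
  have S4: "ff p 2 + ff 2 c \<le> ff (p+c-2) 2 + ff 2 2" using T2[OF p2 assms(3), of 2] by (simp add: ff_sym)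
  have pc: "p + c - 2 = a+b+c-4" by (simp add: p_def)
  show "ff a b + ff b c + ff c a \<le> 2 * ff (a+b+c-4) 2 + sqrt 8"
    using S1 S2 S3[unfolded pc] S4[unfolded pc] ff22 by linarith
  assume eq: "ff a b + ff b c + ff c a = 2 * ff (a+b+c-4) 2 + sqrt 8"
  have n1: "(a-2)*(b-2) \<ge> 0" "(p-2)*(c-2) \<ge> 0" using assms p2 by simp_all
  have "\<not> (a-2)*(b-2) > 0" using S1s S2 S3[unfolded pc] S4[unfolded pc] ff22 eq by linarith
  moreover have "\<not> (p-2)*(c-2) > 0" using S1 S2 S3s[unfolded pc] S4[unfolded pc] ff22 eq by linarith
  ultimately show "(a-2)*(b-2) = 0 \<and> (a+b-4)*(c-2) = 0" using n1 by (simp add: p_def)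
qed

lemma edge_bound: fixes a b :: real assumes "a \<ge> 1" "b \<ge> 1"
  shows "ff a b \<le> ff (a+b-1) 1" and "(a-1)*(b-1) > 0 \<Longrightarrow> ff a b < ff (a+b-1) 1"
proof -
  have e: "(a+b-1)^2 + 1^2 = a^2 + b^2 + 2*((a-1)*(b-1))" by (simp add: power2_eq_square algebra_simps)
  have "(a-1)*(b-1) \<ge> 0" using assms by simp
  then show "ff a b \<le> ff (a+b-1) 1" unfolding ff_def using e by simp
  show "(a-1)*(b-1) > 0 \<Longrightarrow> ff a b < ff (a+b-1) 1" unfolding ff_def using e by simp
qed

lemma long_budget: fixes l n :: nat and A B :: real
  assumes "l \<ge> 4" "n \<ge> 5" "A \<ge> real n - 1" "B \<ge> real n - 1"
  shows "2 * (real n + real l) - real l * (4 - sqrt 8) < (real l - 3) * B + 2 * A + sqrt 8"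
proof -
  have l3: "real l - 3 \<ge> 1" using assms by simp
  have f1: "(real l - 3) * B \<ge> (real l - 3) * (real n - 1)" using assms l3 by (simp add: mult_left_mono)
  have f2: "real l * sqrt 8 < real l * 3" using s8_lt3 assms by (intro mult_strict_left_mono) auto
  have f3: "(real l - 3) * (real n - 2) \<ge> 1 * 3" using assms l3 by (intro mult_mono) auto
  have e1: "(real l - 3) * (real n - 1) = real l * real n - real l - 3 * real n + 3" by (simp add: algebra_simps)
  have e2: "(real l - 3) * (real n - 2) = real l * real n - 2*real l - 3 * real n + 6" by (simp add: algebra_simps)
  have e3: "2 * (real n + real l) - real l * (4 - sqrt 8) = 2 * real n - 2 * real l + real l * sqrt 8" by (simp add: algebra_simps)
  have n5: "real n \<ge> 5" using assms by simp
  show ?thesis unfolding e3 using f1 f2 f3 e1 e2 assms(3,4) n5 s8_gt2 by (smt (verit))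
qed



definition nbr :: "'a set set \<Rightarrow> 'a \<Rightarrow> 'a set" where
  "nbr E u = {w. {u,w} \<in> E}"

definition cyc :: "'a list \<Rightarrow> 'a set set" where
  "cyc vs = {{vs ! i, vs ! ((i + 1) mod length vs)} | i. i < length vs}"

lemma is_cycle_cyc: "is_cycle E C \<longleftrightarrow> (\<exists>vs. length vs \<ge> 3 \<and> distinct vs \<and> C = cyc vs \<and> C \<subseteq> E)"
  unfolding is_cycle_def cyc_def by simp

lemma cyc_image: "cyc vs = (\<lambda>i. {vs ! i, vs ! ((i + 1) mod length vs)}) ` {..<length vs}"
  unfolding cyc_def by auto

lemma cyc_inj: assumes "distinct vs" "length vs \<ge> 3"
  shows "inj_on (\<lambda>i. {vs ! i, vs ! ((i + 1) mod length vs)}) {..<length vs}"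
proof (rule inj_onI)
  fix i j assume i: "i \<in> {..<length vs}" and j: "j \<in> {..<length vs}"
    and eq: "{vs ! i, vs ! ((i + 1) mod length vs)} = {vs ! j, vs ! ((j + 1) mod length vs)}"
  let ?l = "length vs"
  have l0: "?l > 0" using assms by linarith
  have mi: "(i+1) mod ?l < ?l" "(j+1) mod ?l < ?l" using l0 by simp_all
  show "i = j"
  proof (rule ccontr)
    assume ne: "i \<noteq> j"
    then have "vs ! i \<noteq> vs ! j" using i j assms nth_eq_iff_index_eq by fastforce
    then have a: "vs ! i = vs ! ((j + 1) mod ?l)" and b: "vs ! ((i + 1) mod ?l) = vs ! j"
      using eq by (auto simp: doubleton_eq_iff)
    from a have a': "i = (j+1) mod ?l" using i mi assms nth_eq_iff_index_eq by fastforce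
    from b have b': "j = (i+1) mod ?l" using j mi assms nth_eq_iff_index_eq by fastforce
    show False
    proof (cases "i + 1 < ?l")
      case True
      then have "j = i + 1" using b' by simp
      then have ii: "i = (i + 2) mod ?l" using a' by simp
      show False
      proof (cases "i + 2 < ?l")
        case True then show False using ii by simp
      next
        case False
        then have "i + 2 = ?l" using \<open>i + 1 < ?l\<close> by simp
        then have "i = 0" using ii by simp
        then show False using \<open>i + 2 = ?l\<close> assms by simp
      qed
    next
      case False
      then have "i + 1 = ?l" using i by simp
      then have "j = 0" using b' by simp
      then have "i = 1 mod ?l" using a' by simp
      then have "i = 1" using assms by simp
      then show False using \<open>i + 1 = ?l\<close> assms by simp
    qed
  qed
qed

lemma cyc_card: assumes "distinct vs" "length vs \<ge> 3" shows "card (cyc vs) = length vs"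
  unfolding cyc_image using card_image[OF cyc_inj[OF assms]] by simp

lemma cyc_Union: assumes "length vs \<ge> 3" shows "\<Union> (cyc vs) = set vs"
proof
  have "length vs > 0" using assms by linarith
  then show "\<Union> (cyc vs) \<subseteq> set vs" unfolding cyc_def using assms by (auto intro!: nth_mem)
  show "set vs \<subseteq> \<Union> (cyc vs)"
  proof
    fix x assume "x \<in> set vs"
    then obtain i where "i < length vs" "x = vs ! i" by (metis in_set_conv_nth)
    then show "x \<in> \<Union> (cyc vs)" unfolding cyc_def by blast
  qed
qed

lemma cyc_edge_nb: assumes "distinct vs" "length vs \<ge> 3" "{x, y} \<in> cyc vs" "i < length vs" "x = vs ! i"
  shows "y = vs ! ((i + 1) mod length vs) \<or> y = vs ! ((i + length vs - 1) mod length vs)"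
proof -
  let ?l = "length vs"
  obtain k where k: "k < ?l" "{x,y} = {vs ! k, vs ! ((k + 1) mod ?l)}" using assms(3) unfolding cyc_def by auto
  have l0: "?l > 0" using assms by linarith
  have mk: "(k+1) mod ?l < ?l" using l0 by simp
  show ?thesis
  proof (cases "x = vs ! k")
    case True
    then have "k = i" using assms k nth_eq_iff_index_eq by metis
    moreover have "y = vs ! ((k + 1) mod ?l)" using k True
      by (metis doubleton_eq_iff)
    ultimately show ?thesis by simp
  next
    case False
    then have xy: "x = vs ! ((k + 1) mod ?l)" "y = vs ! k" using k by (auto simp: doubleton_eq_iff)
    then have "i = (k+1) mod ?l" using assms mk nth_eq_iff_index_eq by metis
    then have "k = (i + ?l - 1) mod ?l"
    proof (cases "k + 1 < ?l")
      case True
      then have "i = k + 1" using \<open>i = (k+1) mod ?l\<close> by simp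
      then have "i + ?l - 1 = k + ?l" by simp
      then show ?thesis using k(1) by simp
    next
      case False
      then have "k + 1 = ?l" using k(1) by simp
      then have "i = 0" using \<open>i = (k+1) mod ?l\<close> by simp
      then show ?thesis using \<open>k + 1 = ?l\<close> by simp
    qed
    then show ?thesis using xy by simp
  qed
qed

locale sg =
  fixes V :: "'a set" and E :: "'a set set"
  assumes sg: "simple_graph V E"
begin

lemma finV: "finite V" using sg unfolding simple_graph_def by simp

lemma edge: "e \<in> E \<Longrightarrow> e \<subseteq> V \<and> card e = 2" using sg unfolding simple_graph_def by simp

lemma finE: "finite E"
proof -
  have "E \<subseteq> Pow V" using edge by auto
  then show ?thesis using finV finite_subset by blast
qed

lemma edge2: assumes "e \<in> E" obtains x y where "x \<noteq> y" "e = {x,y}" "x \<in> V" "y \<in> V"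
  using edge[OF assms] by (metis card_2_iff insert_subset)

lemma pair_ne: "{u, w} \<in> E \<Longrightarrow> u \<noteq> w"
  using edge by fastforce

lemma pair_V: "{u, w} \<in> E \<Longrightarrow> u \<in> V \<and> w \<in> V"
  using edge by fastforce

lemma nbr_sub: "nbr E u \<subseteq> V - {u}"
  unfolding nbr_def using pair_ne pair_V by auto

lemma fin_nbr: "finite (nbr E u)" using nbr_sub finV finite_subset by blast

lemma nbr_sym: "w \<in> nbr E u \<longleftrightarrow> u \<in> nbr E w"
  unfolding nbr_def by (simp add: insert_commute)

lemma degree_nbr: "degree E u = card (nbr E u)"
proof -
  have "{e\<in>E. u\<in>e} = (\<lambda>w. {u,w}) ` nbr E u"
  proof
    show "{e\<in>E. u\<in>e} \<subseteq> (\<lambda>w. {u,w}) ` nbr E u"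
    proof
      fix e assume e: "e \<in> {e\<in>E. u\<in>e}"
      then obtain x y where xy: "x \<noteq> y" "e = {x,y}" using edge2 by blast
      show "e \<in> (\<lambda>w. {u,w}) ` nbr E u"
      proof (cases "u = x")
        case True then show ?thesis using e xy unfolding nbr_def by auto
      next
        case False then have "u = y" using e xy by auto
        then show ?thesis using e xy unfolding nbr_def by (auto simp: insert_commute)
      qed
    qed
    show "(\<lambda>w. {u,w}) ` nbr E u \<subseteq> {e\<in>E. u\<in>e}" unfolding nbr_def by auto
  qed
  moreover have "inj_on (\<lambda>w. {u,w}) (nbr E u)"
    by (rule inj_onI) (auto simp: doubleton_eq_iff nbr_def dest: pair_ne)
  ultimately show ?thesis unfolding degree_def by (simp add: card_image)
qed

lemma degree_le: "u \<in> V \<Longrightarrow> degree E u \<le> card V - 1"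
  using degree_nbr nbr_sub card_mono[OF _ nbr_sub] finV
  by (metis card_Diff_singleton finite_Diff)

end



locale cg = sg +
  assumes cac: "cactus V E"
begin

lemma cyc_E: "C \<in> cycles E \<Longrightarrow> C \<subseteq> E"
  unfolding cycles_def is_cycle_def by auto

lemma cycles_fin: "finite (cycles E)"
proof -
  have "cycles E \<subseteq> Pow E" using cyc_E by auto
  then show ?thesis using finE finite_subset by blast
qed

lemma cycle_obtain: assumes "C \<in> cycles E"
  obtains vs where "length vs \<ge> 3" "distinct vs" "C = cyc vs" "C \<subseteq> E"
  using assms unfolding cycles_def is_cycle_cyc by auto

lemma cyc_in_cycles: "length vs \<ge> 3 \<Longrightarrow> distinct vs \<Longrightarrow> cyc vs \<subseteq> E \<Longrightarrow> cyc vs \<in> cycles E"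
  unfolding cycles_def is_cycle_cyc by auto

lemma cycle_sub_V: "C \<in> cycles E \<Longrightarrow> \<Union>C \<subseteq> V"
  using cyc_E edge by blast

lemma two_common: assumes "C1 \<in> cycles E" "C2 \<in> cycles E" "x \<noteq> y"
  "x \<in> \<Union>C1" "y \<in> \<Union>C1" "x \<in> \<Union>C2" "y \<in> \<Union>C2"
  shows "C1 = C2"
proof (rule ccontr)
  assume ne: "C1 \<noteq> C2"
  then have "card (\<Union>C1 \<inter> \<Union>C2) \<le> 1" using cac assms unfolding cactus_def by blast
  moreover have "{x,y} \<subseteq> \<Union>C1 \<inter> \<Union>C2" using assms by auto
  moreover have "finite (\<Union>C1 \<inter> \<Union>C2)" using cycle_sub_V[OF assms(1)] finV finite_subset by blast
  ultimately have "card {x,y} \<le> 1" by (meson card_mono order_trans)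
  then show False using assms by simp
qed

lemma cycles_disj: assumes "C1 \<in> cycles E" "C2 \<in> cycles E" "C1 \<noteq> C2" shows "C1 \<inter> C2 = {}"
proof (rule ccontr)
  assume "C1 \<inter> C2 \<noteq> {}"
  then obtain e where e: "e \<in> C1" "e \<in> C2" by auto
  then have "e \<in> E" using cyc_E assms by auto
  then obtain x y where "x \<noteq> y" "e = {x,y}" using edge2 by blast
  then show False using two_common[OF assms(1,2)] e assms(3) by blast
qed

lemma cyc_path_edge: assumes "cyc vs \<subseteq> E" "m + 1 < length vs"
  shows "{vs ! m, vs ! (m+1)} \<in> E"
proof -
  have "{vs ! m, vs ! ((m+1) mod length vs)} \<in> cyc vs" unfolding cyc_def using assms(2) by auto
  then show ?thesis using assms by auto
qed

lemma chord: assumes C: "cyc vs \<in> cycles E" "distinct vs" "length vs \<ge> 3"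
  and ij: "i < j" "j < length vs" and e: "{vs!i, vs!j} \<in> E"
  shows "j = i+1 \<or> (i = 0 \<and> j = length vs - 1)"
proof (rule ccontr)
  assume nc: "\<not> (j = i+1 \<or> (i = 0 \<and> j = length vs - 1))"
  let ?l = "length vs"
  define L where "L = map (\<lambda>k. vs!(i+k)) [0..<j-i+1]"
  have lenL: "length L = j - i + 1" unfolding L_def by simp
  have len3: "length L \<ge> 3" using nc ij lenL by linarith
  have Lnth: "\<And>k. k < j - i + 1 \<Longrightarrow> L ! k = vs ! (i+k)" unfolding L_def by (simp del: upt_Suc)
  have CE: "cyc vs \<subseteq> E" using C cyc_E by blast
  have distL: "distinct L" unfolding L_def distinct_map
  proof
    show "distinct [0..<j - i + 1]" by simp
    show "inj_on (\<lambda>k. vs ! (i + k)) (set [0..<j - i + 1])"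
    proof (rule inj_onI)
      fix a b assume "a \<in> set [0..<j - i + 1]" "b \<in> set [0..<j - i + 1]" "vs ! (i + a) = vs ! (i + b)"
      then show "a = b" using ij C(2) nth_eq_iff_index_eq by fastforce
    qed
  qed
  have edgesL: "\<forall>k<length L. {L!k, L!((k+1) mod length L)} \<in> E"
  proof (intro allI impI)
    fix k assume k: "k < length L"
    show "{L!k, L!((k+1) mod length L)} \<in> E"
    proof (cases "k < j - i")
      case True
      then have "(k+1) mod length L = k+1" using lenL by simp
      then have "{L!k, L!((k+1) mod length L)} = {vs!(i+k), vs!(i+k+1)}" using Lnth True by simp
      moreover have "{vs!(i+k), vs!(i+k+1)} \<in> E" using cyc_path_edge[OF CE, of "i+k"] True ij by simp
      ultimately show ?thesis by simp
    next
      case False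
      then have kk: "k = j - i" using k lenL by simp
      then have "(k+1) mod length L = 0" using lenL by simp
      then have "{L!k, L!((k+1) mod length L)} = {vs!j, vs!i}" using Lnth kk ij by simp
      then show ?thesis using e by (simp add: insert_commute)
    qed
  qed
  have cL: "cyc L \<in> cycles E"
  proof (rule cyc_in_cycles[OF len3 distL])
    show "cyc L \<subseteq> E" unfolding cyc_def using edgesL by auto
  qed
  have inL: "{vs!i, vs!j} \<in> cyc L"
  proof -
    have "j - i < length L" using lenL by simp
    moreover have "(j - i + 1) mod length L = 0" using lenL by simp
    ultimately have "{L!(j-i), L!0} \<in> cyc L" unfolding cyc_def by (metis (mono_tags, lifting) mem_Collect_eq)
    then show ?thesis using Lnth ij by (simp add: insert_commute)
  qed
  have notin: "{vs!i, vs!j} \<notin> cyc vs"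
  proof
    assume a: "{vs!i, vs!j} \<in> cyc vs"
    have "vs!j = vs!((i+1) mod ?l) \<or> vs!j = vs!((i + ?l - 1) mod ?l)"
      by (rule cyc_edge_nb[OF C(2,3) a]) (use ij in auto)
    moreover have "(i+1) mod ?l = i + 1" using ij by simp
    moreover have "(i + ?l - 1) mod ?l < ?l" using ij by (intro mod_less_divisor) linarith
    ultimately have "j = i+1 \<or> j = (i + ?l - 1) mod ?l" using C(2) ij nth_eq_iff_index_eq
      by (metis add_lessD1 less_trans_Suc nat_less_le order_less_trans Suc_eq_plus1 linorder_not_le le_less_Suc_eq)
    then have "j = (i + ?l - 1) mod ?l" using nc by blast
    moreover have "(i + ?l - 1) mod ?l = (if i = 0 then ?l - 1 else i - 1)"
    proof (cases "i = 0")
      case True then show ?thesis using ij by simp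
    next
      case False
      then have h: "i + ?l - 1 = (i - 1) + ?l" using ij by simp
      have "((i - 1) + ?l) mod ?l = i - 1" using ij by simp
      then show ?thesis using False h by simp
    qed
    ultimately show False using nc ij by (auto split: if_splits)
  qed
  have "cyc L = cyc vs"
  proof (rule two_common[OF cL C(1)])
    show "vs!i \<noteq> vs!j" using C(2) ij nth_eq_iff_index_eq by fastforce
    show "vs!i \<in> \<Union>(cyc L)" "vs!j \<in> \<Union>(cyc L)" using inL by auto
    show "vs!i \<in> \<Union>(cyc vs)" "vs!j \<in> \<Union>(cyc vs)" using cyc_Union[OF C(3)] ij by auto
  qed
  then show False using inL notin by simp
qed

end


lemma prev_idx: assumes "i < (l::nat)" shows "(i + l - 1) mod l = (if i = 0 then l - 1 else i - 1)"
proof (cases "i = 0")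
  case True then show ?thesis using assms by simp
next
  case False
  then have h: "i + l - 1 = (i - 1) + l" using assms by simp
  have "((i - 1) + l) mod l = i - 1" using assms by simp
  then show ?thesis using False h by simp
qed

lemma next_idx: assumes "i < (l::nat)" shows "(i + 1) mod l = (if i + 1 < l then i + 1 else 0)"
proof (cases "i + 1 < l")
  case True then show ?thesis by simp
next
  case False then have "i + 1 = l" using assms by simp
  then show ?thesis by simp
qed

context cg begin

lemma outside: assumes C: "cyc vs \<in> cycles E" "distinct vs" "length vs \<ge> 3"
  and w: "w \<notin> set vs" and ij: "i < j" "j < length vs"
  and e: "{w, vs!i} \<in> E" "{w, vs!j} \<in> E"
  shows False
proof -
  let ?l = "length vs"
  define L where "L = w # map (\<lambda>k. vs!(i+k)) [0..<j-i+1]"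
  have lenL: "length L = j - i + 2" unfolding L_def by simp
  have len3: "length L \<ge> 3" using ij lenL by linarith
  have L0: "L ! 0 = w" unfolding L_def by simp
  have Lnth: "\<And>k. k < j - i + 1 \<Longrightarrow> L ! Suc k = vs ! (i+k)" unfolding L_def by (simp del: upt_Suc)
  have CE: "cyc vs \<subseteq> E" using C cyc_E by blast
  have distL: "distinct L" unfolding L_def distinct.simps(2)
  proof (intro conjI)
    show "w \<notin> set (map (\<lambda>k. vs ! (i + k)) [0..<j - i + 1])" using w ij by auto
    show "distinct (map (\<lambda>k. vs ! (i + k)) [0..<j - i + 1])" unfolding distinct_map
    proof
      show "distinct [0..<j - i + 1]" by simp
      show "inj_on (\<lambda>k. vs ! (i + k)) (set [0..<j - i + 1])"
      proof (rule inj_onI)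
        fix a b assume "a \<in> set [0..<j - i + 1]" "b \<in> set [0..<j - i + 1]" "vs ! (i + a) = vs ! (i + b)"
        then show "a = b" using ij C(2) nth_eq_iff_index_eq by fastforce
      qed
    qed
  qed
  have edgesL: "\<forall>k<length L. {L!k, L!((k+1) mod length L)} \<in> E"
  proof (intro allI impI)
    fix k assume k: "k < length L"
    show "{L!k, L!((k+1) mod length L)} \<in> E"
    proof (cases k)
      case 0
      then have "(k+1) mod length L = Suc 0" using lenL ij by simp
      then show ?thesis using 0 L0 Lnth[of 0] e by simp
    next
      case (Suc k')
      show ?thesis
      proof (cases "k' < j - i")
        case True
        then have "(k+1) mod length L = Suc (Suc k')" using lenL Suc by simp
        then have "{L!k, L!((k+1) mod length L)} = {vs!(i+k'), vs!(i+k'+1)}" using Lnth True Suc by simp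
        moreover have "{vs!(i+k'), vs!(i+k'+1)} \<in> E" using cyc_path_edge[OF CE, of "i+k'"] True ij by simp
        ultimately show ?thesis by simp
      next
        case False
        then have kk: "k' = j - i" using k lenL Suc by simp
        then have "(k+1) mod length L = 0" using lenL Suc by simp
        then have "{L!k, L!((k+1) mod length L)} = {vs!j, w}" using Lnth kk ij L0 Suc by simp
        then show ?thesis using e by (simp add: insert_commute)
      qed
    qed
  qed
  have cL: "cyc L \<in> cycles E"
  proof (rule cyc_in_cycles[OF len3 distL])
    show "cyc L \<subseteq> E" unfolding cyc_def using edgesL by auto
  qed
  have inL: "{w, vs!i} \<in> cyc L"
  proof -
    have "0 < length L" using lenL by simp
    moreover have "(0 + 1) mod length L = 1" using lenL ij by simp
    ultimately have "{L!0, L!1} \<in> cyc L" unfolding cyc_def by (metis (mono_tags, lifting) mem_Collect_eq)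
    then show ?thesis using Lnth[of 0] L0 by simp
  qed
  have notin: "{w, vs!i} \<notin> cyc vs"
    using cyc_Union[OF C(3)] w by auto
  have "cyc L = cyc vs"
  proof (rule two_common[OF cL C(1)])
    show "vs!i \<noteq> vs!j" using C(2) ij nth_eq_iff_index_eq by fastforce
    have a1: "L ! Suc 0 = vs!i" "L ! Suc (j-i) = vs!j" using Lnth[of 0] Lnth[of "j-i"] ij by auto
    have a2: "Suc 0 < length L" "Suc (j-i) < length L" using lenL ij by auto
    have "{vs!i, vs!j} \<subseteq> set L" using nth_mem[OF a2(1)] nth_mem[OF a2(2)] a1 by simp
    then show "vs!i \<in> \<Union>(cyc L)" "vs!j \<in> \<Union>(cyc L)" using cyc_Union[OF len3] by auto
    show "vs!i \<in> \<Union>(cyc vs)" "vs!j \<in> \<Union>(cyc vs)" using cyc_Union[OF C(3)] ij by auto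
  qed
  then show False using inL notin by simp
qed

lemma nbr_cyc: assumes C: "cyc vs \<in> cycles E" "distinct vs" "length vs \<ge> 3" and i: "i < length vs"
  shows "nbr E (vs!i) \<inter> set vs \<subseteq> {vs!((i+1) mod length vs), vs!((i + length vs - 1) mod length vs)}"
proof
  let ?l = "length vs"
  fix w assume w: "w \<in> nbr E (vs!i) \<inter> set vs"
  then obtain j where j: "j < ?l" "w = vs!j" by (metis IntD2 in_set_conv_nth)
  have ew: "{vs!i, vs!j} \<in> E" using w j unfolding nbr_def by auto
  have "j \<noteq> i" using pair_ne ew by auto
  then consider "i < j" | "j < i" by linarith
  then show "w \<in> {vs!((i+1) mod ?l), vs!((i + ?l - 1) mod ?l)}"
  proof cases
    case 1
    then have "j = i+1 \<or> (i = 0 \<and> j = ?l - 1)" using chord[OF C 1 j(1) ew] by simp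
    then show ?thesis
    proof
      assume "j = i + 1" then show ?thesis using j by simp
    next
      assume "i = 0 \<and> j = ?l - 1" then show ?thesis using j by simp
    qed
  next
    case 2
    have ew': "{vs!j, vs!i} \<in> E" using ew by (simp add: insert_commute)
    then have "i = j+1 \<or> (j = 0 \<and> i = ?l - 1)" using chord[OF C 2 i ew'] by simp
    then show ?thesis
    proof
      assume a: "i = j + 1"
      then have "i + ?l - 1 = j + ?l" by simp
      then have "(i + ?l - 1) mod ?l = j" using j by simp
      then show ?thesis using j by simp
    next
      assume a: "j = 0 \<and> i = ?l - 1"
      then have "i + 1 = ?l" using C(3) by simp
      then have "(i+1) mod ?l = 0" by simp
      then show ?thesis using j a by simp
    qed
  qed
qed

lemma card_nbr_cyc: assumes C: "cyc vs \<in> cycles E" "distinct vs" "length vs \<ge> 3" and v: "v \<in> set vs"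
  shows "card (nbr E v \<inter> set vs) \<le> 2"
proof -
  obtain i where i: "i < length vs" "v = vs!i" using v by (metis in_set_conv_nth)
  have "card (nbr E v \<inter> set vs) \<le> card {vs!((i+1) mod length vs), vs!((i + length vs - 1) mod length vs)}"
    using nbr_cyc[OF C i(1)] i by (intro card_mono) auto
  also have "\<dots> \<le> 2" by (rule card_insert_le_m1) auto
  finally show ?thesis .
qed

lemma nbr_cyc_ge2: assumes C: "cyc vs \<in> cycles E" "distinct vs" "length vs \<ge> 3" and v: "v \<in> set vs"
  shows "degree E v \<ge> 2"
proof -
  let ?l = "length vs"
  obtain i where i: "i < ?l" "v = vs!i" using v by (metis in_set_conv_nth)
  have CE: "cyc vs \<subseteq> E" using C cyc_E by blast
  have l0: "?l > 0" using C by linarith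
  have e1: "{vs!i, vs!((i+1) mod ?l)} \<in> E" using CE i unfolding cyc_def by auto
  have "(i + ?l - 1) mod ?l < ?l" using l0 by simp
  then have e2': "{vs!((i + ?l - 1) mod ?l), vs!(((i + ?l - 1) mod ?l + 1) mod ?l)} \<in> E"
    using CE unfolding cyc_def by blast
  have "((i + ?l - 1) mod ?l + 1) mod ?l = i"
  proof -
    have "((i + ?l - 1) mod ?l + 1) mod ?l = ((i + ?l - 1) + 1) mod ?l" by (simp add: mod_Suc_eq)
    also have "(i + ?l - 1) + 1 = i + ?l" using l0 by simp
    finally show ?thesis using i by simp
  qed
  then have e2: "{vs!i, vs!((i + ?l - 1) mod ?l)} \<in> E" using e2' by (simp add: insert_commute)
  have ne: "(i+1) mod ?l \<noteq> (i + ?l - 1) mod ?l"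
    unfolding prev_idx[OF i(1)] next_idx[OF i(1)] using C(3) i(1) by auto
  have "{vs!((i+1) mod ?l), vs!((i + ?l - 1) mod ?l)} \<subseteq> nbr E v"
    using e1 e2 i unfolding nbr_def by auto
  moreover have "vs!((i+1) mod ?l) \<noteq> vs!((i + ?l - 1) mod ?l)"
    using ne C(2) l0 nth_eq_iff_index_eq by (metis mod_less_divisor)
  ultimately have "card {vs!((i+1) mod ?l), vs!((i + ?l - 1) mod ?l)} \<le> card (nbr E v)"
    using fin_nbr card_mono by blast
  then show ?thesis using degree_nbr \<open>vs!((i+1) mod ?l) \<noteq> _\<close> by simp
qed

end


lemma cyc3: "cyc [a,b,c] = {{a,b},{b,c},{c,a}}"
proof -
  have "{..<length [a,b,c]} = {0,1,2}" by auto
  then show ?thesis unfolding cyc_image by auto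
qed

lemma sum_shift_mod: fixes g :: "nat \<Rightarrow> real" assumes "l > 0"
  shows "(\<Sum>i<l. g ((i+1) mod l)) = (\<Sum>i<l. g i)"
proof -
  have inj: "inj_on (\<lambda>i. (i+1) mod l) {..<l}"
  proof (rule inj_onI)
    fix i j assume i: "i \<in> {..<l}" and j: "j \<in> {..<l}" and e: "(i+1) mod l = (j+1) mod l"
    have "(i+1) mod l = (if i + 1 < l then i + 1 else 0)" "(j+1) mod l = (if j + 1 < l then j + 1 else 0)"
      using next_idx i j by auto
    then show "i = j" using e i j by (auto split: if_splits)
  qed
  have im: "(\<lambda>i. (i+1) mod l) ` {..<l} = {..<l}"
    by (rule endo_inj_surj[OF _ _ inj]) (use assms in auto)
  have "(\<Sum>i<l. g i) = (\<Sum>i\<in>(\<lambda>i. (i+1) mod l) ` {..<l}. g i)" using im by simp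
  also have "\<dots> = (\<Sum>i<l. g ((i+1) mod l))" by (rule sum.reindex[OF inj, unfolded comp_def])
  finally show ?thesis by simp
qed

lemma sum_nth_set: assumes "distinct vs" shows "(\<Sum>i<length vs. g (vs ! i)) = (\<Sum>v\<in>set vs. g v)"
proof -
  have inj: "inj_on (\<lambda>i. vs ! i) {..<length vs}" using assms by (simp add: inj_on_def nth_eq_iff_index_eq)
  have im: "(\<lambda>i. vs ! i) ` {..<length vs} = set vs" by (auto simp: in_set_conv_nth)
  show ?thesis using sum.reindex[OF inj, of g] im by (simp add: comp_def)
qed

context cg begin

lemma deg_sum_cyc: assumes C: "cyc vs \<in> cycles E" "distinct vs" "length vs \<ge> 3"
  shows "(\<Sum>v\<in>set vs. degree E v) \<le> card V + length vs"
proof -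
  let ?S = "set vs"
  have SV: "?S \<subseteq> V" using cycle_sub_V[OF C(1)] cyc_Union[OF C(3)] by simp
  have cS: "card ?S = length vs" using C(2) by (simp add: distinct_card)
  have d1: "\<And>v. v \<in> ?S \<Longrightarrow> degree E v \<le> 2 + card (nbr E v - ?S)"
  proof -
    fix v assume v: "v \<in> ?S"
    have "degree E v = card (nbr E v \<inter> ?S) + card (nbr E v - ?S)"
      using degree_nbr card_Int_Diff[OF fin_nbr] by simp
    then show "degree E v \<le> 2 + card (nbr E v - ?S)" using card_nbr_cyc[OF C v] by simp
  qed
  have disj: "\<forall>v1\<in>?S. \<forall>v2\<in>?S. v1 \<noteq> v2 \<longrightarrow> (nbr E v1 - ?S) \<inter> (nbr E v2 - ?S) = {}"
  proof (intro ballI impI)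
    fix v1 v2 assume v1: "v1 \<in> ?S" and v2: "v2 \<in> ?S" and ne: "v1 \<noteq> v2"
    show "(nbr E v1 - ?S) \<inter> (nbr E v2 - ?S) = {}"
    proof (rule ccontr)
      assume "(nbr E v1 - ?S) \<inter> (nbr E v2 - ?S) \<noteq> {}"
      then obtain w where w: "w \<in> nbr E v1" "w \<in> nbr E v2" "w \<notin> ?S" by auto
      obtain i where i: "i < length vs" "v1 = vs!i" using v1 by (metis in_set_conv_nth)
      obtain j where j: "j < length vs" "v2 = vs!j" using v2 by (metis in_set_conv_nth)
      have e1: "{w, vs!i} \<in> E" "{w, vs!j} \<in> E" using w i j unfolding nbr_def by (auto simp: insert_commute)
      have "i \<noteq> j" using ne i j by auto
      then consider "i < j" | "j < i" by linarith
      then show False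
      proof cases
        case 1 show False using outside[OF C w(3) 1 j(1) e1] by simp
      next
        case 2 show False using outside[OF C w(3) 2 i(1) e1(2) e1(1)] by simp
      qed
    qed
  qed
  have "(\<Sum>v\<in>?S. card (nbr E v - ?S)) = card (\<Union>v\<in>?S. (nbr E v - ?S))"
    by (rule card_UN_disjoint[symmetric]) (use disj fin_nbr in auto)
  also have "\<dots> \<le> card (V - ?S)"
    by (rule card_mono) (use finV nbr_sub in auto)
  also have "\<dots> = card V - length vs" using SV cS finV by (simp add: card_Diff_subset finite_subset)
  finally have s2: "(\<Sum>v\<in>?S. card (nbr E v - ?S)) \<le> card V - length vs" .
  have "(\<Sum>v\<in>?S. degree E v) \<le> (\<Sum>v\<in>?S. 2 + card (nbr E v - ?S))" by (rule sum_mono) (rule d1)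
  also have "\<dots> = 2 * length vs + (\<Sum>v\<in>?S. card (nbr E v - ?S))" 
    by (subst sum.distrib) (simp add: cS)
  finally show ?thesis using s2 cS card_mono[OF finV SV] by linarith
qed

lemma tri_cycle: assumes "{u,v} \<in> E" "{v,w} \<in> E" "{w,u} \<in> E" "u \<noteq> w"
  shows "cyc [u,v,w] \<in> cycles E"
proof (rule cyc_in_cycles)
  show "length [u,v,w] \<ge> 3" by simp
  show "distinct [u,v,w]" using assms pair_ne by auto
  show "cyc [u,v,w] \<subseteq> E" unfolding cyc3 using assms by auto
qed

lemma bridge: assumes e: "{u,v} \<in> E" "{u,v} \<notin> \<Union>(cycles E)"
  shows "degree E u + degree E v \<le> card V"
proof -
  have disj: "nbr E u \<inter> nbr E v = {}"
  proof (rule ccontr)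
    assume "nbr E u \<inter> nbr E v \<noteq> {}"
    then obtain w where w: "{u,w} \<in> E" "{v,w} \<in> E" unfolding nbr_def by auto
    have "w \<noteq> u" using pair_ne w by auto
    have "cyc [u,v,w] \<in> cycles E"
      by (rule tri_cycle) (use e w \<open>w \<noteq> u\<close> in \<open>auto simp: insert_commute\<close>)
    moreover have "{u,v} \<in> cyc [u,v,w]" unfolding cyc3 by simp
    ultimately show False using e by blast
  qed
  have "card (nbr E u) + card (nbr E v) = card (nbr E u \<union> nbr E v)"
    using card_Un_disjoint[OF fin_nbr fin_nbr disj] by simp
  also have "\<dots> \<le> card V" using nbr_sub finV by (intro card_mono) auto
  finally show ?thesis using degree_nbr by simp
qed

end


lemma cycle_exists:
  assumes sg: "simple_graph V E" and ne: "V \<noteq> {}" and deg: "\<forall>v\<in>V. degree E v \<ge> 2"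
  shows "\<exists>C. C \<in> cycles E"
proof -
  interpret sg V E by (rule sg.intro) (rule sg)
  define P where "P = {p. distinct p \<and> set p \<subseteq> V \<and> p \<noteq> [] \<and> (\<forall>k. k + 1 < length p \<longrightarrow> {p!k, p!(k+1)} \<in> E)}"
  have finP: "finite P"
    by (rule finite_subset[OF _ finite_subset_distinct[OF finV]]) (auto simp: P_def)
  obtain v0 where v0: "v0 \<in> V" using ne by auto
  have "[v0] \<in> P" using v0 by (simp add: P_def)
  then have "length ` P \<noteq> {}" by auto
  define M where "M = Max (length ` P)"
  have "M \<in> length ` P" unfolding M_def by (rule Max_in) (use finP \<open>length ` P \<noteq> {}\<close> in auto)
  then obtain p where pP: "p \<in> P" and lp: "length p = M" by auto
  have maxp: "\<And>q. q \<in> P \<Longrightarrow> length q \<le> length p" using finP lp unfolding M_def by simp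
  have pd: "distinct p" "set p \<subseteq> V" "p \<noteq> []" and pe: "\<And>k. k + 1 < length p \<Longrightarrow> {p!k, p!(k+1)} \<in> E"
    using pP unfolding P_def by auto
  define x where "x = p ! 0"
  have xV: "x \<in> V" using pd x_def by (simp add: hd_conv_nth[symmetric] subset_iff)
  have inp: "\<And>y. y \<in> nbr E x \<Longrightarrow> y \<in> set p"
  proof (rule ccontr)
    fix y assume y: "y \<in> nbr E x" and yn: "y \<notin> set p"
    have "y # p \<in> P" unfolding P_def
    proof (intro CollectI conjI allI impI)
      show "distinct (y # p)" using pd yn by simp
      show "set (y # p) \<subseteq> V" using pd y nbr_sub by auto
      show "y # p \<noteq> []" by simp
      fix k assume k: "k + 1 < length (y # p)"
      show "{(y # p) ! k, (y # p) ! (k + 1)} \<in> E"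
      proof (cases k)
        case 0 then show ?thesis using y unfolding nbr_def x_def by (simp add: insert_commute)
      next
        case (Suc k') then show ?thesis using pe[of k'] k by simp
      qed
    qed
    then show False using maxp by fastforce
  qed
  have "degree E x \<ge> 2" using deg xV by simp
  then have "card (nbr E x) \<ge> 2" using degree_nbr by simp
  then obtain y1 y2 where y12: "y1 \<in> nbr E x" "y2 \<in> nbr E x" "y1 \<noteq> y2"
    by (metis One_nat_def card_le_Suc0_iff_eq fin_nbr not_less_eq_eq numeral_2_eq_2)
  have "\<exists>y\<in>nbr E x. \<exists>j. j \<ge> 2 \<and> j < length p \<and> y = p ! j"
  proof -
    have notx: "\<And>y. y \<in> nbr E x \<Longrightarrow> y \<noteq> p ! 0" using nbr_sub x_def by auto
    obtain j1 where j1: "j1 < length p" "y1 = p ! j1" using inp[OF y12(1)] by (metis in_set_conv_nth)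
    obtain j2 where j2: "j2 < length p" "y2 = p ! j2" using inp[OF y12(2)] by (metis in_set_conv_nth)
    have "j1 \<noteq> 0"
    proof
      assume "j1 = 0" then show False using notx[OF y12(1)] j1(2) by simp
    qed
    moreover have "j2 \<noteq> 0"
    proof
      assume "j2 = 0" then show False using notx[OF y12(2)] j2(2) by simp
    qed
    moreover have "j1 \<noteq> j2" using y12 j1 j2 by auto
    ultimately have "j1 \<ge> 2 \<or> j2 \<ge> 2" by linarith
    then show ?thesis using j1 j2 y12 by blast
  qed
  then obtain y j where y: "y \<in> nbr E x" and j: "j \<ge> 2" "j < length p" "y = p ! j" by blast
  define L where "L = take (j+1) p"
  have lenL: "length L = j + 1" using j by (simp add: L_def)
  have Lnth: "\<And>k. k \<le> j \<Longrightarrow> L ! k = p ! k" unfolding L_def by simp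
  have "cyc L \<in> cycles E"
    unfolding cycles_def is_cycle_cyc
  proof (intro CollectI exI conjI)
    show "3 \<le> length L" using lenL j by simp
    show "distinct L" unfolding L_def using pd by simp
    show "cyc L \<subseteq> E"
    proof
      fix e assume "e \<in> cyc L"
      then obtain k where k: "k < length L" "e = {L ! k, L ! ((k+1) mod length L)}" unfolding cyc_def by auto
      show "e \<in> E"
      proof (cases "k < j")
        case True
        then have "(k+1) mod length L = k + 1" using lenL by simp
        then show ?thesis using k True Lnth pe[of k] j by simp
      next
        case False
        then have "k = j" using k lenL by simp
        then have "(k+1) mod length L = 0" using lenL by simp
        then show ?thesis using k \<open>k = j\<close> Lnth y j unfolding nbr_def x_def by (simp add: insert_commute)
      qed
    qed
  qed simp
  then show ?thesis by blast
qed

lemma forest_card: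
  assumes "finite V" "simple_graph V E" "cycles E = {}" "V \<noteq> {}"
  shows "card E < card V"
  using assms
proof (induction "card V" arbitrary: V E rule: less_induct)
  case less
  interpret sg V E by (rule sg.intro) (rule less.prems(2))
  show ?case
  proof (cases "\<forall>v\<in>V. degree E v \<ge> 2")
    case True
    then show ?thesis using cycle_exists[OF less.prems(2) less.prems(4)] less.prems(3) by blast
  next
    case False
    then obtain v where v: "v \<in> V" "degree E v \<le> 1" by auto
    define V' where "V' = V - {v}"
    define E' where "E' = {e\<in>E. v \<notin> e}"
    have sg': "simple_graph V' E'" using less.prems(2) unfolding simple_graph_def V'_def E'_def by auto
    have cyc': "cycles E' = {}"
    proof -
      have "cycles E' \<subseteq> cycles E" unfolding cycles_def is_cycle_def E'_def by blast
      then show ?thesis using less.prems(3) by blast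
    qed
    have Esplit: "E = E' \<union> {e\<in>E. v \<in> e}" "E' \<inter> {e\<in>E. v \<in> e} = {}" unfolding E'_def by auto
    have cE: "card E = card E' + degree E v"
      unfolding degree_def using Esplit finE card_Un_disjoint
      by (metis (no_types, lifting) finite_Un)
    show ?thesis
    proof (cases "V' = {}")
      case True
      then have "V = {v}" using v V'_def by auto
      have "E = {}"
      proof (rule ccontr)
        assume "E \<noteq> {}"
        then obtain e where "e \<in> E" by auto
        then obtain a b where "a \<noteq> b" "e = {a,b}" "a \<in> V" "b \<in> V" using edge2 by blast
        then show False using \<open>V = {v}\<close> by auto
      qed
      then show ?thesis using \<open>V = {v}\<close> by simp
    next
      case False
      have "card V > 0" using v finV card_gt_0_iff by blast
      then have "card V' < card V" using v finV unfolding V'_def by simp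
      then have "card E' < card V'"
        using less.hyps[OF _ _ sg' cyc' False] finV unfolding V'_def by simp
      moreover have "card V' = card V - 1" using v finV unfolding V'_def by simp
      ultimately show ?thesis using cE v by linarith
    qed
  qed
qed



definition AA :: "nat \<Rightarrow> real" where "AA n = ff (real n - 1) 2"
definition BB :: "nat \<Rightarrow> real" where "BB n = ff (real n - 1) 1"
definition dd :: "'a set set \<Rightarrow> 'a \<Rightarrow> real" where "dd E v = real (degree E v)"
definition fe :: "'a set set \<Rightarrow> 'a set \<Rightarrow> real" where "fe E e = sqrt (\<Sum>u\<in>e. (real (degree E u))\<^sup>2)"

lemma sombor_fe: "sombor E = (\<Sum>e\<in>E. fe E e)" unfolding sombor_def fe_def by simp

lemma fe_pair: "x \<noteq> y \<Longrightarrow> fe E {x,y} = ff (dd E x) (dd E y)"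
  unfolding fe_def ff_def dd_def by simp

lemma ff_ge: "x \<ge> 0 \<Longrightarrow> ff x y \<ge> x"
  unfolding ff_def by (rule real_le_rsqrt) simp

lemma AB_ge: "n \<ge> 1 \<Longrightarrow> AA n \<ge> real n - 1" "n \<ge> 1 \<Longrightarrow> BB n \<ge> real n - 1"
  unfolding AA_def BB_def by (auto intro: ff_ge)

context cg begin

lemma cycle_sum: assumes "distinct vs" "length vs \<ge> 3"
  shows "(\<Sum>e\<in>cyc vs. fe E e) = (\<Sum>i<length vs. ff (dd E (vs!i)) (dd E (vs!((i+1) mod length vs))))"
proof -
  let ?l = "length vs"
  have "(\<Sum>e\<in>cyc vs. fe E e) = (\<Sum>i<?l. fe E {vs ! i, vs ! ((i + 1) mod ?l)})"
    unfolding cyc_image by (rule sum.reindex[OF cyc_inj[OF assms], unfolded comp_def])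
  also have "\<dots> = (\<Sum>i<?l. ff (dd E (vs!i)) (dd E (vs!((i+1) mod ?l))))"
  proof (rule sum.cong[OF refl])
    fix i assume i: "i \<in> {..<?l}"
    have "(i+1) mod ?l \<noteq> i" using i assms next_idx[of i ?l] by auto
    then have "vs ! i \<noteq> vs ! ((i+1) mod ?l)" using assms i nth_eq_iff_index_eq
      by (metis lessThan_iff mod_less_divisor zero_less_iff_neq_zero length_0_conv list.size(3) not_less_zero)
    then show "fe E {vs ! i, vs ! ((i + 1) mod ?l)} = ff (dd E (vs!i)) (dd E (vs!((i+1) mod ?l)))"
      by (rule fe_pair)
  qed
  finally show ?thesis .
qed

lemma cyc_bound: assumes n5: "card V \<ge> 5" and C: "C \<in> cycles E"
  shows "(\<Sum>e\<in>C. fe E e) \<le> (real (card C) - 3) * BB (card V) + 2 * AA (card V) + sqrt 8"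
    and "(\<Sum>e\<in>C. fe E e) = (real (card C) - 3) * BB (card V) + 2 * AA (card V) + sqrt 8 \<Longrightarrow>
      card C = 3 \<and> (\<exists>a b c. distinct [a,b,c] \<and> C = {{a,b},{b,c},{c,a}} \<and>
         degree E a = card V - 1 \<and> degree E b = 2 \<and> degree E c = 2)"
proof -
  let ?n = "card V"
  obtain vs where vs: "length vs \<ge> 3" "distinct vs" "C = cyc vs" "C \<subseteq> E" using cycle_obtain[OF C] by blast
  let ?l = "length vs"
  have Cvs: "cyc vs \<in> cycles E" using C vs by simp
  have cC: "card C = ?l" using cyc_card[OF vs(2,1)] vs(3) by simp
  have sumC: "(\<Sum>e\<in>C. fe E e) = (\<Sum>i<?l. ff (dd E (vs!i)) (dd E (vs!((i+1) mod ?l))))"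
    using cycle_sum[OF vs(2,1)] vs(3) by simp
  have dge2: "\<And>i. i < ?l \<Longrightarrow> dd E (vs!i) \<ge> 2"
    using nbr_cyc_ge2[OF Cvs vs(2,1)] unfolding dd_def by (metis nth_mem of_nat_le_iff of_nat_numeral)
  have dsum: "(\<Sum>i<?l. dd E (vs!i)) \<le> real ?n + real ?l"
  proof -
    have "(\<Sum>i<?l. dd E (vs!i)) = real (\<Sum>v\<in>set vs. degree E v)"
      using sum_nth_set[OF vs(2), of "dd E"] unfolding dd_def by simp
    also have "\<dots> \<le> real (?n + ?l)" using deg_sum_cyc[OF Cvs vs(2,1)] by (simp only: of_nat_le_iff)
    finally show ?thesis by simp
  qed
  have A1: "AA ?n \<ge> real ?n - 1" "BB ?n \<ge> real ?n - 1" using AB_ge n5 by auto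
  have goal: "(\<Sum>e\<in>C. fe E e) \<le> (real (card C) - 3) * BB ?n + 2 * AA ?n + sqrt 8 \<and>
      ((\<Sum>e\<in>C. fe E e) = (real (card C) - 3) * BB ?n + 2 * AA ?n + sqrt 8 \<longrightarrow>
      card C = 3 \<and> (\<exists>a b c. distinct [a,b,c] \<and> C = {{a,b},{b,c},{c,a}} \<and>
         degree E a = ?n - 1 \<and> degree E b = 2 \<and> degree E c = 2))"
  proof (cases "?l \<ge> 4")
    case True
    have "(\<Sum>e\<in>C. fe E e) \<le> (\<Sum>i<?l. dd E (vs!i) + dd E (vs!((i+1) mod ?l)) - 4 + sqrt 8)"
      unfolding sumC
    proof (rule sum_mono)
      fix i assume i: "i \<in> {..<?l}"
      have "?l > 0" using vs(1) by linarith
      then have "(i+1) mod ?l < ?l" by simp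
      then show "ff (dd E (vs!i)) (dd E (vs!((i+1) mod ?l))) \<le> dd E (vs!i) + dd E (vs!((i+1) mod ?l)) - 4 + sqrt 8"
        unfolding ff_def using lin_bound dge2 i by simp
    qed
    also have "\<dots> = (\<Sum>i<?l. dd E (vs!i)) + (\<Sum>i<?l. dd E (vs!((i+1) mod ?l))) - real ?l * (4 - sqrt 8)"
      by (simp add: sum.distrib sum_subtractf algebra_simps)
    also have "(\<Sum>i<?l. dd E (vs!((i+1) mod ?l))) = (\<Sum>i<?l. dd E (vs!i))"
      by (rule sum_shift_mod[of ?l "\<lambda>i. dd E (vs!i)"]) (use vs(1) in linarith)
    finally have "(\<Sum>e\<in>C. fe E e) \<le> 2 * (\<Sum>i<?l. dd E (vs!i)) - real ?l * (4 - sqrt 8)" by simp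
    also have "\<dots> \<le> 2 * (real ?n + real ?l) - real ?l * (4 - sqrt 8)" using dsum by simp
    also have "\<dots> < (real ?l - 3) * BB ?n + 2 * AA ?n + sqrt 8"
      by (rule long_budget) (use True n5 A1 in auto)
    finally show ?thesis using cC True by simp
  next
    case False
    then have l3: "?l = 3" using vs(1) by simp
    then obtain a b c where abc: "vs = [a,b,c]"
      unfolding numeral_3_eq_3 length_Suc_conv by auto
    have dabc: "distinct [a,b,c]" using vs(2) abc by simp
    have Ceq: "C = {{a,b},{b,c},{c,a}}" using vs(3) abc cyc3 by simp
    have ge2: "dd E a \<ge> 2" "dd E b \<ge> 2" "dd E c \<ge> 2" using dge2[of 0] dge2[of 1] dge2[of 2] abc by auto
    have s3: "(\<Sum>e\<in>C. fe E e) = ff (dd E a) (dd E b) + ff (dd E b) (dd E c) + ff (dd E c) (dd E a)"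
    proof -
      have "{..<(3::nat)} = {0,1,2}" by auto
      then show ?thesis unfolding sumC abc by simp
    qed
    have ds: "dd E a + dd E b + dd E c \<le> real ?n + 3"
    proof -
      have "{..<(3::nat)} = {0,1,2}" by auto
      then show ?thesis using dsum abc by simp
    qed
    let ?s = "dd E a + dd E b + dd E c"
    have tb: "ff (dd E a) (dd E b) + ff (dd E b) (dd E c) + ff (dd E c) (dd E a) \<le> 2 * ff (?s - 4) 2 + sqrt 8"
      using tri_bound(1)[OF ge2] by simp
    have m1: "ff (?s - 4) 2 \<le> AA ?n" unfolding AA_def using ds ge2 by (intro ff_mono) auto
    have le: "(\<Sum>e\<in>C. fe E e) \<le> 2 * AA ?n + sqrt 8" using s3 tb m1 by linarith
    have eqc: "(\<Sum>e\<in>C. fe E e) = 2 * AA ?n + sqrt 8 \<Longrightarrow>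
       (\<exists>a b c. distinct [a,b,c] \<and> C = {{a,b},{b,c},{c,a}} \<and>
         degree E a = ?n - 1 \<and> degree E b = 2 \<and> degree E c = 2)"
    proof -
      assume eq: "(\<Sum>e\<in>C. fe E e) = 2 * AA ?n + sqrt 8"
      have s4: "?s - 4 = real ?n - 1"
      proof (rule ccontr)
        assume "?s - 4 \<noteq> real ?n - 1"
        then have "?s - 4 < real ?n - 1" using ds by linarith
        then have "ff (?s - 4) 2 < AA ?n" unfolding AA_def using ge2 by (intro ff_strict) auto
        then show False using eq s3 tb by linarith
      qed
      have eq2: "ff (dd E a) (dd E b) + ff (dd E b) (dd E c) + ff (dd E c) (dd E a) = 2 * ff (?s - 4) 2 + sqrt 8"
        unfolding s4 AA_def[symmetric] using eq s3 by simp
      have pr: "(dd E a - 2) * (dd E b - 2) = 0" "(dd E a + dd E b - 4) * (dd E c - 2) = 0"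
        using tri_bound(2)[OF ge2 eq2] by auto
      define x where "x = degree E a"
      define y where "y = degree E b"
      define z where "z = degree E c"
      have xyz: "dd E a = real x" "dd E b = real y" "dd E c = real z" unfolding x_def y_def z_def dd_def by auto
      have g2: "x \<ge> 2" "y \<ge> 2" "z \<ge> 2" using ge2 xyz by auto
      have "real x + real y + real z = real ?n + 3" using s4 xyz by linarith
      then have sum: "x + y + z = ?n + 3" by linarith
      have p1: "x = 2 \<or> y = 2" using pr(1) xyz by simp
      have "real x + real y - 4 = 0 \<or> real z - 2 = 0" using pr(2) xyz by simp
      then have p2: "x + y = 4 \<or> z = 2" by linarith
      have n1: "?n - 1 \<noteq> 2" using n5 by simp
      have Cs: "C = {{b,c},{c,a},{a,b}}" "C = {{c,a},{a,b},{b,c}}" using Ceq by auto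
      consider "z \<noteq> 2" | "z = 2" "x = 2" | "z = 2" "y = 2" using p1 by blast
      then show ?thesis
      proof cases
        case 1
        then have "x = 2" "y = 2" using p2 g2 by auto
        moreover have "z = ?n - 1" using sum calculation by simp
        moreover have "distinct [c,a,b]" using dabc by auto
        ultimately show ?thesis using Cs(2) unfolding x_def y_def z_def by blast
      next
        case 2
        moreover have "y = ?n - 1" using sum 2 by simp
        moreover have "distinct [b,c,a]" using dabc by auto
        ultimately show ?thesis using Cs(1) unfolding x_def y_def z_def by blast
      next
        case 3
        moreover have "x = ?n - 1" using sum 3 by simp
        ultimately show ?thesis using Ceq dabc unfolding x_def y_def z_def by blast
      qed
    qed
    show ?thesis using le eqc cC l3 by simp
  qed
  then show "(\<Sum>e\<in>C. fe E e) \<le> (real (card C) - 3) * BB (card V) + 2 * AA (card V) + sqrt 8" by simp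
  show "(\<Sum>e\<in>C. fe E e) = (real (card C) - 3) * BB (card V) + 2 * AA (card V) + sqrt 8 \<Longrightarrow>
      card C = 3 \<and> (\<exists>a b c. distinct [a,b,c] \<and> C = {{a,b},{b,c},{c,a}} \<and>
         degree E a = card V - 1 \<and> degree E b = 2 \<and> degree E c = 2)" using goal by blast
qed

end


context cg begin

lemma cycle_card3: assumes "C \<in> cycles E" shows "card C \<ge> 3"
proof -
  obtain vs where "length vs \<ge> 3" "distinct vs" "C = cyc vs" using cycle_obtain[OF assms] by blast
  then show ?thesis using cyc_card[of vs] by simp
qed

lemma cycle_ne: assumes "C \<in> cycles E" shows "C \<noteq> {}"
proof
  assume "C = {}"
  with cycle_card3[OF assms] show False by simp
qed

lemma edge_count: assumes "V \<noteq> {}" shows "card E \<le> card V - 1 + card (cycles E)"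
proof -
  define pick where "pick = (\<lambda>C::'a set set. SOME e. e \<in> C)"
  have pk: "\<And>C. C \<in> cycles E \<Longrightarrow> pick C \<in> C"
  proof -
    fix C assume "C \<in> cycles E"
    then obtain x where "x \<in> C" using cycle_ne by blast
    then show "pick C \<in> C" unfolding pick_def by (rule someI)
  qed
  define R where "R = pick ` cycles E"
  have inj: "inj_on pick (cycles E)"
  proof (rule inj_onI)
    fix C1 C2 assume c: "C1 \<in> cycles E" "C2 \<in> cycles E" "pick C1 = pick C2"
    show "C1 = C2"
    proof (rule ccontr)
      assume "C1 \<noteq> C2"
      then have "C1 \<inter> C2 = {}" using cycles_disj[OF c(1,2)] by simp
      moreover have "pick C1 \<in> C1 \<inter> C2" using pk[OF c(1)] pk[OF c(2)] c(3) by simp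
      ultimately show False by simp
    qed
  qed
  have cR: "card R = card (cycles E)" unfolding R_def using card_image[OF inj] .
  have RE: "R \<subseteq> E"
  proof
    fix e assume "e \<in> R"
    then obtain C where "C \<in> cycles E" "e = pick C" unfolding R_def by auto
    then show "e \<in> E" using pk cyc_E by blast
  qed
  have sg': "simple_graph V (E - R)" using sg unfolding simple_graph_def by simp
  have cyc': "cycles (E - R) = {}"
  proof (rule ccontr)
    assume "cycles (E - R) \<noteq> {}"
    then obtain C where C: "C \<in> cycles (E - R)" by auto
    then have "is_cycle (E - R) C" unfolding cycles_def by simp
    then obtain vs where "length vs \<ge> 3" "distinct vs" "C = cyc vs" "C \<subseteq> E - R"
      unfolding is_cycle_cyc by blast
    then have CE: "C \<in> cycles E" "C \<subseteq> E - R" using cyc_in_cycles by auto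
    moreover have "pick C \<in> R" unfolding R_def using CE by simp
    ultimately show False using pk[OF CE(1)] by blast
  qed
  have "card (E - R) < card V" using forest_card[OF finV sg' cyc' assms] .
  moreover have "card (E - R) = card E - card R" using RE finE by (simp add: card_Diff_subset finite_subset)
  moreover have "card R \<le> card E" using RE finE card_mono by blast
  ultimately show ?thesis using cR by linarith
qed

lemma nc_bound: assumes n5: "card V \<ge> 5" and e: "e \<in> E - \<Union>(cycles E)"
  shows "fe E e \<le> BB (card V)"
    and "fe E e = BB (card V) \<Longrightarrow> \<exists>u v. e = {u,v} \<and> degree E u = card V - 1 \<and> degree E v = 1"
proof -
  let ?n = "card V"
  obtain u v where uv: "u \<noteq> v" "e = {u,v}" using e edge2 by blast
  have euv: "{u,v} \<in> E" "{u,v} \<notin> \<Union>(cycles E)" using e uv by auto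
  have b: "degree E u + degree E v \<le> ?n" using bridge[OF euv] .
  have du: "degree E u \<ge> 1"
  proof -
    have "v \<in> nbr E u" using euv unfolding nbr_def by simp
    then have "card (nbr E u) > 0" using fin_nbr by (auto simp: card_gt_0_iff)
    then show ?thesis using degree_nbr by simp
  qed
  have dv: "degree E v \<ge> 1"
  proof -
    have "u \<in> nbr E v" using euv unfolding nbr_def by (simp add: insert_commute)
    then have "card (nbr E v) > 0" using fin_nbr by (auto simp: card_gt_0_iff)
    then show ?thesis using degree_nbr by simp
  qed
  have fe: "fe E e = ff (dd E u) (dd E v)" using fe_pair[OF uv(1)] uv by simp
  have d1: "dd E u \<ge> 1" "dd E v \<ge> 1" using du dv unfolding dd_def by auto
  have ds: "dd E u + dd E v \<le> real ?n" using b unfolding dd_def by (simp only: of_nat_add[symmetric] of_nat_le_iff)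
  have s1: "ff (dd E u) (dd E v) \<le> ff (dd E u + dd E v - 1) 1" using edge_bound(1)[OF d1] .
  have s2: "ff (dd E u + dd E v - 1) 1 \<le> BB ?n" unfolding BB_def using ds d1 by (intro ff_mono) auto
  show "fe E e \<le> BB ?n" using fe s1 s2 by linarith
  assume eq: "fe E e = BB ?n"
  have np: "\<not> (dd E u - 1) * (dd E v - 1) > 0" using edge_bound(2)[OF d1] s2 fe eq by linarith
  have sn: "dd E u + dd E v - 1 = real ?n - 1"
  proof (rule ccontr)
    assume "dd E u + dd E v - 1 \<noteq> real ?n - 1"
    then have "dd E u + dd E v - 1 < real ?n - 1" using ds by linarith
    then have "ff (dd E u + dd E v - 1) 1 < BB ?n" unfolding BB_def using d1 by (intro ff_strict) auto
    then show False using s1 fe eq by linarith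
  qed
  have "(dd E u - 1) * (dd E v - 1) \<ge> 0" using d1 by simp
  then have "(dd E u - 1) * (dd E v - 1) = 0" using np by linarith
  then have "dd E u = 1 \<or> dd E v = 1" by simp
  then have dj: "degree E u = 1 \<or> degree E v = 1" unfolding dd_def by simp
  have "degree E u + degree E v = ?n" using sn unfolding dd_def by linarith
  from dj show "\<exists>u v. e = {u,v} \<and> degree E u = ?n - 1 \<and> degree E v = 1"
  proof
    assume "degree E u = 1"
    then have "degree E v = ?n - 1" using \<open>degree E u + degree E v = ?n\<close> by simp
    then show ?thesis using uv \<open>degree E u = 1\<close> by (intro exI[of _ v] exI[of _ u]) (simp add: insert_commute)
  next
    assume "degree E v = 1"
    then have "degree E u = ?n - 1" using \<open>degree E u + degree E v = ?n\<close> by simp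
    then show ?thesis using uv \<open>degree E v = 1\<close> by blast
  qed
qed

end


context cg begin

lemma main_ineq: assumes n5: "card V \<ge> 5"
  shows "2 * card (cycles E) \<le> card V - 1"
    and "sombor E \<le> (real (card V) - 1 - 2 * real (card (cycles E))) * BB (card V)
            + real (card (cycles E)) * (2 * AA (card V) + sqrt 8)"
    and "sombor E = (real (card V) - 1 - 2 * real (card (cycles E))) * BB (card V)
            + real (card (cycles E)) * (2 * AA (card V) + sqrt 8) \<Longrightarrow>
         card E = card V - 1 + card (cycles E) \<and>
         (\<forall>e\<in>E - \<Union>(cycles E). \<exists>u v. e = {u,v} \<and> degree E u = card V - 1 \<and> degree E v = 1) \<and>
         (\<forall>C\<in>cycles E. \<exists>a b c. distinct [a,b,c] \<and> C = {{a,b},{b,c},{c,a}} \<and>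
              degree E a = card V - 1 \<and> degree E b = 2 \<and> degree E c = 2)"
proof -
  define t where "t = card (cycles E)"
  define n where "n = card V"
  define B where "B = BB n"
  define K where "K = 2 * AA n + sqrt 8"
  define U where "U = \<Union>(cycles E)"
  define N where "N = E - U"
  define SC where "SC = (\<Sum>C\<in>cycles E. card C)"
  have UE: "U \<subseteq> E" unfolding U_def using cyc_E by blast
  have finU: "finite U" using UE finE finite_subset by blast
  have finN: "finite N" unfolding N_def using finE by simp
  have Vne: "V \<noteq> {}" using n5 by auto
  have B0: "B > 0" using AB_ge(2)[of n] n5 unfolding B_def n_def by simp
  have finC: "\<And>C. C \<in> cycles E \<Longrightarrow> finite C" using cyc_E finE finite_subset by blast
  have disjC: "\<forall>A\<in>cycles E. \<forall>B\<in>cycles E. A \<noteq> B \<longrightarrow> A \<inter> B = {}" using cycles_disj by blast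
  have cU: "card U = SC" unfolding U_def SC_def
    by (rule card_Union_disjoint) (use disjC finC in \<open>auto simp: pairwise_def disjnt_def\<close>)
  have NU: "E = N \<union> U" "N \<inter> U = {}" unfolding N_def using UE by auto
  have cE: "card E = card N + SC"
    using card_Un_disjoint[OF finN finU NU(2)] cU NU(1) by simp
  have t3: "3 * t \<le> SC"
  proof -
    have "(\<Sum>C\<in>cycles E. 3) \<le> SC" unfolding SC_def by (rule sum_mono) (rule cycle_card3)
    then show ?thesis unfolding t_def by simp
  qed
  have ec: "card E \<le> n - 1 + t" using edge_count[OF Vne] unfolding n_def t_def .
  show t2: "2 * card (cycles E) \<le> card V - 1" using t3 ec cE unfolding t_def n_def by linarith
  have SO: "sombor E = (\<Sum>e\<in>N. fe E e) + (\<Sum>C\<in>cycles E. \<Sum>e\<in>C. fe E e)"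
  proof -
    have "sombor E = (\<Sum>e\<in>N. fe E e) + (\<Sum>e\<in>U. fe E e)"
      unfolding sombor_fe using sum.union_disjoint[OF finN finU NU(2)] NU(1) by simp
    moreover have "(\<Sum>e\<in>U. fe E e) = (\<Sum>C\<in>cycles E. \<Sum>e\<in>C. fe E e)" unfolding U_def
      using sum.Union_disjoint[of "cycles E" "fe E"] disjC finC by (simp add: comp_def)
    ultimately show ?thesis by simp
  qed
  define slN where "slN = (\<Sum>e\<in>N. B - fe E e)"
  define bud where "bud = (\<lambda>C::'a set set. (real (card C) - 3) * B + K)"
  define slC where "slC = (\<Sum>C\<in>cycles E. bud C - (\<Sum>e\<in>C. fe E e))"
  have nN: "\<And>e. e \<in> N \<Longrightarrow> 0 \<le> B - fe E e"
  proof -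
    fix e assume "e \<in> N"
    then have "e \<in> E - \<Union>(cycles E)" unfolding N_def U_def .
    then have "fe E e \<le> BB (card V)" by (rule nc_bound(1)[OF n5])
    then show "0 \<le> B - fe E e" unfolding B_def n_def by simp
  qed
  have nC: "\<And>C. C \<in> cycles E \<Longrightarrow> 0 \<le> bud C - (\<Sum>e\<in>C. fe E e)"
  proof -
    fix C assume "C \<in> cycles E"
    then have "(\<Sum>e\<in>C. fe E e) \<le> (real (card C) - 3) * BB (card V) + 2 * AA (card V) + sqrt 8"
      by (rule cyc_bound(1)[OF n5])
    then show "0 \<le> bud C - (\<Sum>e\<in>C. fe E e)" unfolding bud_def B_def K_def n_def by simp
  qed
  have slN0: "slN \<ge> 0" unfolding slN_def using nN by (rule sum_nonneg)
  have slC0: "slC \<ge> 0" unfolding slC_def using nC by (rule sum_nonneg)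
  have sN: "(\<Sum>e\<in>N. fe E e) = real (card N) * B - slN"
    unfolding slN_def by (simp add: sum_subtractf)
  have sbud: "(\<Sum>C\<in>cycles E. bud C) = real SC * B - 3 * real t * B + real t * K"
  proof -
    have b1: "\<And>C. bud C = real (card C) * B - 3 * B + K" unfolding bud_def by (simp add: left_diff_distrib)
    have "(\<Sum>C\<in>cycles E. bud C) = (\<Sum>C\<in>cycles E. real (card C) * B) - (\<Sum>C\<in>cycles E. 3 * B) + (\<Sum>C\<in>cycles E. K)"
      unfolding b1 by (simp only: sum.distrib sum_subtractf)
    also have "(\<Sum>C\<in>cycles E. real (card C) * B) = real SC * B" unfolding SC_def by (simp add: sum_distrib_right)
    finally show ?thesis unfolding t_def by simp
  qed
  have sC: "(\<Sum>C\<in>cycles E. \<Sum>e\<in>C. fe E e) = (\<Sum>C\<in>cycles E. bud C) - slC"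
    unfolding slC_def by (simp only: sum_subtractf)
  have e1: "(real (card E) - 3 * real t) * B = real (card N) * B + real SC * B - 3 * real t * B"
  proof -
    have "real (card E) = real (card N) + real SC" using cE by simp
    then show ?thesis by (simp add: left_diff_distrib distrib_right)
  qed
  have SO2: "sombor E = (real (card E) - 3 * real t) * B + real t * K - slN - slC"
    using SO sN sC sbud e1 by linarith
  define R where "R = (real n - 1 - 2 * real t) * B + real t * K"
  have e2: "(real n - 1 + real t - real (card E)) * B = (real n - 1 - 2 * real t) * B - (real (card E) - 3 * real t) * B"
    by (simp add: left_diff_distrib distrib_right)
  have diff: "R - sombor E = (real n - 1 + real t - real (card E)) * B + slN + slC"
    unfolding R_def SO2 e2 by simp
  have ec': "real (card E) \<le> real n - 1 + real t" using ec n5 unfolding n_def by linarith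
  have m0: "(real n - 1 + real t - real (card E)) * B \<ge> 0" using ec' B0 by simp
  show "sombor E \<le> (real (card V) - 1 - 2 * real (card (cycles E))) * BB (card V)
            + real (card (cycles E)) * (2 * AA (card V) + sqrt 8)"
    using diff m0 slN0 slC0 unfolding R_def n_def t_def B_def K_def by linarith
  assume eq: "sombor E = (real (card V) - 1 - 2 * real (card (cycles E))) * BB (card V)
            + real (card (cycles E)) * (2 * AA (card V) + sqrt 8)"
  then have "R - sombor E = 0" unfolding R_def n_def t_def B_def K_def by simp
  then have z: "(real n - 1 + real t - real (card E)) * B = 0" "slN = 0" "slC = 0"
    using diff m0 slN0 slC0 by linarith+
  have "real (card E) = real n - 1 + real t" using z(1) B0 by simp
  then have cE': "card E = card V - 1 + card (cycles E)" unfolding n_def t_def using n5 by linarith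
  have allN: "\<forall>e\<in>N. B - fe E e = 0"
    using sum_nonneg_eq_0_iff[OF finN, of "\<lambda>e. B - fe E e"] nN z(2) unfolding slN_def by simp
  have allC: "\<forall>C\<in>cycles E. bud C - (\<Sum>e\<in>C. fe E e) = 0"
    using sum_nonneg_eq_0_iff[OF cycles_fin, of "\<lambda>C. bud C - (\<Sum>e\<in>C. fe E e)"] nC z(3) unfolding slC_def by simp
  have pN: "\<forall>e\<in>E - \<Union>(cycles E). \<exists>u v. e = {u,v} \<and> degree E u = card V - 1 \<and> degree E v = 1"
  proof
    fix e assume e: "e \<in> E - \<Union>(cycles E)"
    then have "e \<in> N" unfolding N_def U_def .
    then have "fe E e = BB (card V)" using allN unfolding B_def n_def by simp
    then show "\<exists>u v. e = {u,v} \<and> degree E u = card V - 1 \<and> degree E v = 1" by (rule nc_bound(2)[OF n5 e])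
  qed
  have pC: "\<forall>C\<in>cycles E. \<exists>a b c. distinct [a,b,c] \<and> C = {{a,b},{b,c},{c,a}} \<and>
              degree E a = card V - 1 \<and> degree E b = 2 \<and> degree E c = 2"
  proof
    fix C assume C: "C \<in> cycles E"
    then have "bud C - (\<Sum>e\<in>C. fe E e) = 0" using allC by simp
    then have "(\<Sum>e\<in>C. fe E e) = (real (card C) - 3) * BB (card V) + 2 * AA (card V) + sqrt 8"
      unfolding bud_def B_def K_def n_def by simp
    then show "\<exists>a b c. distinct [a,b,c] \<and> C = {{a,b},{b,c},{c,a}} \<and>
              degree E a = card V - 1 \<and> degree E b = 2 \<and> degree E c = 2" by (rule cyc_bound(2)[OF n5 C, THEN conjunct2])
  qed
  show "card E = card V - 1 + card (cycles E) \<and>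
         (\<forall>e\<in>E - \<Union>(cycles E). \<exists>u v. e = {u,v} \<and> degree E u = card V - 1 \<and> degree E v = 1) \<and>
         (\<forall>C\<in>cycles E. \<exists>a b c. distinct [a,b,c] \<and> C = {{a,b},{b,c},{c,a}} \<and>
              degree E a = card V - 1 \<and> degree E b = 2 \<and> degree E c = 2)" using cE' pN pC by simp
qed

end


definition pn :: "nat \<Rightarrow> nat" where "pn i = (if odd i then i + 1 else i - 1)"

lemma H_mem: assumes t: "2*t \<le> n - 1" and ij: "i < n" "j < n"
  shows "{i,j} \<in> H_edges n t \<longleftrightarrow> i \<noteq> j \<and> (i = 0 \<or> j = 0 \<or> (1 \<le> i \<and> i \<le> 2*t \<and> j = pn i))"
proof
  assume "{i,j} \<in> H_edges n t"
  then consider k where "1 \<le> k" "k < n" "{i,j} = {0,k}" | k where "1 \<le> k" "k \<le> t" "{i,j} = {2*k-1, 2*k}"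
    unfolding H_edges_def by blast
  then show "i \<noteq> j \<and> (i = 0 \<or> j = 0 \<or> (1 \<le> i \<and> i \<le> 2*t \<and> j = pn i))"
  proof cases
    case 1
    then have "(i = 0 \<and> j = k) \<or> (i = k \<and> j = 0)" by (auto simp: doubleton_eq_iff)
    then show ?thesis using 1 by auto
  next
    case 2
    then have "(i = 2*k-1 \<and> j = 2*k) \<or> (i = 2*k \<and> j = 2*k-1)" by (auto simp: doubleton_eq_iff)
    then show ?thesis
    proof
      assume a: "i = 2*k-1 \<and> j = 2*k"
      then have "odd i" using 2 by presburger
      then show ?thesis using a 2 unfolding pn_def by auto
    next
      assume a: "i = 2*k \<and> j = 2*k-1"
      then have "even i" by presburger
      then show ?thesis using a 2 unfolding pn_def by auto
    qed
  qed
next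
  assume h: "i \<noteq> j \<and> (i = 0 \<or> j = 0 \<or> (1 \<le> i \<and> i \<le> 2*t \<and> j = pn i))"
  then consider "i = 0" | "j = 0" | "i \<noteq> 0" "j \<noteq> 0" "1 \<le> i" "i \<le> 2*t" "j = pn i" by blast
  then show "{i,j} \<in> H_edges n t"
  proof cases
    case 1
    then have "{i,j} = {0,j}" "1 \<le> j" "j < n" using h ij by auto
    then show ?thesis unfolding H_edges_def by blast
  next
    case 2
    then have "{i,j} = {0,i}" "1 \<le> i" "i < n" using h ij by auto
    then show ?thesis unfolding H_edges_def by blast
  next
    case 3
    show ?thesis
    proof (cases "odd i")
      case True
      then obtain m where m: "i = 2*m+1" by (metis oddE)
      have "{i,j} = {2*(m+1)-1, 2*(m+1)}" "1 \<le> m+1" "m+1 \<le> t" using 3 m True unfolding pn_def by auto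
      then show ?thesis unfolding H_edges_def by blast
    next
      case False
      then obtain m where m: "i = 2*m" by (metis evenE)
      have "{i,j} = {2*m-1, 2*m}" "1 \<le> m" "m \<le> t" using 3 m False unfolding pn_def by (auto simp: insert_commute)
      then show ?thesis unfolding H_edges_def by blast
    qed
  qed
qed

lemma H_edge_form: assumes t: "2*t \<le> n - 1" and e: "e \<in> H_edges n t"
  shows "\<exists>i j. e = {i,j} \<and> i < n \<and> j < n \<and> i \<noteq> j"
proof -
  from e consider k where "1 \<le> k" "k < n" "e = {0,k}" | k where "1 \<le> k" "k \<le> t" "e = {2*k-1, 2*k}"
    unfolding H_edges_def by blast
  then show ?thesis
  proof cases
    case 1 then show ?thesis by (intro exI[of _ 0] exI[of _ k]) auto
  next
    case 2
    then have "2*k < n" using t by linarith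
    then show ?thesis using 2 by (intro exI[of _ "2*k-1"] exI[of _ "2*k"]) auto
  qed
qed

lemma H_sg: assumes t: "2*t \<le> n - 1" shows "simple_graph {0..<n} (H_edges n t)"
  unfolding simple_graph_def
proof (rule conjI)
  show "finite {0..<n}" by simp
  show "\<forall>e\<in>H_edges n t. e \<subseteq> {0..<n} \<and> card e = 2"
  proof
    fix e assume "e \<in> H_edges n t"
    then obtain i j where "e = {i,j}" "i < n" "j < n" "i \<noteq> j" using H_edge_form[OF t] by blast
    then show "e \<subseteq> {0..<n} \<and> card e = 2" by auto
  qed
qed

lemma pn_props: assumes "1 \<le> i" "i \<le> 2*t"
  shows "1 \<le> pn i" "pn i \<le> 2*t" "pn i \<noteq> i" "pn (pn i) = i"
proof -
  show "1 \<le> pn i" using assms unfolding pn_def by presburger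
  show "pn i \<le> 2*t" using assms unfolding pn_def by presburger
  show "pn i \<noteq> i" using assms unfolding pn_def by presburger
  show "pn (pn i) = i" using assms unfolding pn_def by presburger
qed



lemma H_degree: assumes t: "2*t \<le> n - 1" and i: "i < n"
  shows "degree (H_edges n t) i = (if i = 0 then n - 1 else if i \<le> 2*t then 2 else 1)"
proof -
  interpret sg "{0..<n}" "H_edges n t" by (rule sg.intro) (rule H_sg[OF t])
  have nb: "nbr (H_edges n t) i = {w. w < n \<and> {i,w} \<in> H_edges n t}"
    unfolding nbr_def using pair_V by auto
  have nb2: "nbr (H_edges n t) i = {w. w < n \<and> i \<noteq> w \<and> (i = 0 \<or> w = 0 \<or> (1 \<le> i \<and> i \<le> 2*t \<and> w = pn i))}"
    unfolding nb using H_mem[OF t i] by auto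
  show ?thesis
  proof (cases "i = 0")
    case True
    then have "nbr (H_edges n t) i = {1..<n}" unfolding nb2 by auto
    then show ?thesis using True degree_nbr by simp
  next
    case False
    show ?thesis
    proof (cases "i \<le> 2*t")
      case True
      have p: "1 \<le> pn i" "pn i \<le> 2*t" "pn i \<noteq> i" using pn_props[of i t] True False by auto
      then have "nbr (H_edges n t) i = {0, pn i}" unfolding nb2 using False True t i by auto
      then show ?thesis using False True degree_nbr p by simp
    next
      case F2: False
      then have "nbr (H_edges n t) i = {0}" unfolding nb2 using False i by auto
      then show ?thesis using False F2 degree_nbr by simp
    qed
  qed
qed

lemma H_sombor: assumes t: "2*t \<le> n - 1"
  shows "sombor (H_edges n t) = real (2*t) * AA n + real (n - 1 - 2*t) * BB n + real t * sqrt 8"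
proof -
  let ?H = "H_edges n t"
  define S where "S = (\<lambda>i. {0,i}) ` {1..<n}"
  define M where "M = (\<lambda>k. {2*k-1, 2*k}) ` {1..t}"
  have HSM: "?H = S \<union> M" unfolding H_edges_def S_def M_def by auto
  have disj: "S \<inter> M = {}"
  proof -
    have "\<forall>x\<in>M. 0 \<notin> x" unfolding M_def by auto
    moreover have "\<forall>x\<in>S. 0 \<in> x" unfolding S_def by auto
    ultimately show ?thesis by blast
  qed
  have injS: "inj_on (\<lambda>i. {0,i}) {1..<n}" by (rule inj_onI) (auto simp: doubleton_eq_iff)
  have injM: "inj_on (\<lambda>k. {2*k-1, 2*k}) {1..t}"
  proof (rule inj_onI)
    fix a b assume a: "a \<in> {1..t}" and b: "b \<in> {1..t}" and e: "{2*a-1, 2*a} = {2*b-1, 2*b}"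
    then have "2*a = 2*b \<or> 2*a = 2*b - 1" by (auto simp: doubleton_eq_iff)
    then show "a = b" by presburger
  qed
  have feS: "\<And>i. i \<in> {1..<n} \<Longrightarrow> fe ?H {0,i} = ff (real n - 1) (if i \<le> 2*t then 2 else 1)"
  proof -
    fix i assume i: "i \<in> {1..<n}"
    have "fe ?H {0,i} = ff (dd ?H 0) (dd ?H i)" using i by (intro fe_pair) auto
    also have "dd ?H 0 = real n - 1" unfolding dd_def using H_degree[OF t, of 0] i by auto
    also have "dd ?H i = (if i \<le> 2*t then 2 else 1)" unfolding dd_def using H_degree[OF t, of i] i by auto
    finally show "fe ?H {0,i} = ff (real n - 1) (if i \<le> 2*t then 2 else 1)" .
  qed
  have feM: "\<And>k. k \<in> {1..t} \<Longrightarrow> fe ?H {2*k-1, 2*k} = sqrt 8"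
  proof -
    fix k assume k: "k \<in> {1..t}"
    have kn: "2*k < n" using k t by auto
    have "fe ?H {2*k-1, 2*k} = ff (dd ?H (2*k-1)) (dd ?H (2*k))" using k by (intro fe_pair) auto
    also have "dd ?H (2*k-1) = 2" unfolding dd_def using H_degree[OF t, of "2*k-1"] k kn by auto
    also have "dd ?H (2*k) = 2" unfolding dd_def using H_degree[OF t, of "2*k"] k kn by auto
    finally show "fe ?H {2*k-1, 2*k} = sqrt 8" by (simp add: ff22)
  qed
  have "sombor ?H = (\<Sum>e\<in>S. fe ?H e) + (\<Sum>e\<in>M. fe ?H e)"
    unfolding sombor_fe HSM by (rule sum.union_disjoint) (use disj in \<open>auto simp: S_def M_def\<close>)
  also have "(\<Sum>e\<in>S. fe ?H e) = (\<Sum>i\<in>{1..<n}. fe ?H {0,i})"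
    unfolding S_def by (rule sum.reindex[OF injS, unfolded comp_def])
  also have "\<dots> = (\<Sum>i\<in>{1..<n}. ff (real n - 1) (if i \<le> 2*t then 2 else 1))"
    by (rule sum.cong[OF refl feS])
  also have "\<dots> = (\<Sum>i\<in>{1..2*t}. ff (real n - 1) 2) + (\<Sum>i\<in>{2*t+1..<n}. ff (real n - 1) 1)"
  proof -
    have sp: "{1..<n} = {1..2*t} \<union> {2*t+1..<n}" "{1..2*t} \<inter> {2*t+1..<n} = {}" using t by auto
    have "(\<Sum>i\<in>{1..<n}. ff (real n - 1) (if i \<le> 2*t then 2 else 1)) =
      (\<Sum>i\<in>{1..2*t}. ff (real n - 1) (if i \<le> 2*t then 2 else 1)) + (\<Sum>i\<in>{2*t+1..<n}. ff (real n - 1) (if i \<le> 2*t then 2 else 1))"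
      unfolding sp(1) by (rule sum.union_disjoint) (use sp(2) in auto)
    moreover have "(\<Sum>i\<in>{1..2*t}. ff (real n - 1) (if i \<le> 2*t then 2 else 1)) = (\<Sum>i\<in>{1..2*t}. ff (real n - 1) 2)"
      by (rule sum.cong) auto
    moreover have "(\<Sum>i\<in>{2*t+1..<n}. ff (real n - 1) (if i \<le> 2*t then 2 else 1)) = (\<Sum>i\<in>{2*t+1..<n}. ff (real n - 1) 1)"
      by (rule sum.cong) auto
    ultimately show ?thesis by simp
  qed
  also have "(\<Sum>e\<in>M. fe ?H e) = (\<Sum>k\<in>{1..t}. fe ?H {2*k-1, 2*k})"
    unfolding M_def by (rule sum.reindex[OF injM, unfolded comp_def])
  also have "\<dots> = (\<Sum>k\<in>{1..t}. sqrt 8)" by (rule sum.cong[OF refl feM])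
  finally show ?thesis unfolding AA_def BB_def using t by simp
qed



lemma sombor_inj: assumes sg: "simple_graph V E" and inj: "inj_on f V"
  shows "sombor ((`) f ` E) = sombor E"
proof -
  interpret sg V E by (rule sg.intro) (rule sg)
  let ?E' = "(`) f ` E"
  have injE: "inj_on ((`) f) E"
  proof (rule inj_onI)
    fix a b assume "a \<in> E" "b \<in> E" "f ` a = f ` b"
    then show "a = b" using inj_on_image_eq_iff[OF inj] edge by blast
  qed
  have deg: "\<And>u. u \<in> V \<Longrightarrow> degree ?E' (f u) = degree E u"
  proof -
    fix u assume u: "u \<in> V"
    have "{e'\<in>?E'. f u \<in> e'} = (`) f ` {e\<in>E. u\<in>e}"
    proof
      show "{e'\<in>?E'. f u \<in> e'} \<subseteq> (`) f ` {e\<in>E. u\<in>e}"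
      proof
        fix e' assume "e' \<in> {e'\<in>?E'. f u \<in> e'}"
        then obtain e where e: "e \<in> E" "e' = f ` e" "f u \<in> f ` e" by auto
        then have "u \<in> e" using inj_on_image_mem_iff[OF inj u] edge[OF e(1)] by blast
        then show "e' \<in> (`) f ` {e\<in>E. u\<in>e}" using e by auto
      qed
      show "(`) f ` {e\<in>E. u\<in>e} \<subseteq> {e'\<in>?E'. f u \<in> e'}" by auto
    qed
    moreover have "inj_on ((`) f) {e\<in>E. u\<in>e}" using injE by (rule inj_on_subset) auto
    ultimately show "degree ?E' (f u) = degree E u" unfolding degree_def by (simp add: card_image)
  qed
  have "sombor ?E' = (\<Sum>e\<in>E. sqrt (\<Sum>w\<in>f ` e. (real (degree ?E' w))\<^sup>2))"
    unfolding sombor_def by (rule sum.reindex[OF injE, unfolded comp_def])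
  also have "\<dots> = (\<Sum>e\<in>E. sqrt (\<Sum>u\<in>e. (real (degree E u))\<^sup>2))"
  proof (rule sum.cong[OF refl])
    fix e assume e: "e \<in> E"
    have ie: "inj_on f e" using inj edge[OF e] inj_on_subset by blast
    have "(\<Sum>w\<in>f ` e. (real (degree ?E' w))\<^sup>2) = (\<Sum>u\<in>e. (real (degree ?E' (f u)))\<^sup>2)"
      by (rule sum.reindex[OF ie, unfolded comp_def])
    also have "\<dots> = (\<Sum>u\<in>e. (real (degree E u))\<^sup>2)"
      by (rule sum.cong[OF refl]) (use deg edge[OF e] in auto)
    finally show "sqrt (\<Sum>w\<in>f ` e. (real (degree ?E' w))\<^sup>2) = sqrt (\<Sum>u\<in>e. (real (degree E u))\<^sup>2)" by simp
  qed
  finally show ?thesis unfolding sombor_def .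
qed

lemma iso_image: assumes sg1: "simple_graph V E" and sg2: "simple_graph W F" and iso: "graph_iso V E W F"
  shows "\<exists>f. inj_on f V \<and> (`) f ` E = F"
proof -
  interpret G1: sg V E by (rule sg.intro) (rule sg1)
  interpret G2: sg W F by (rule sg.intro) (rule sg2)
  obtain f where bij: "bij_betw f V W" and adj: "\<forall>u\<in>V. \<forall>v\<in>V. {u, v} \<in> E \<longleftrightarrow> {f u, f v} \<in> F"
    using iso unfolding graph_iso_def by blast
  have "(`) f ` E = F"
  proof
    show "(`) f ` E \<subseteq> F"
    proof
      fix e' assume "e' \<in> (`) f ` E"
      then obtain e where e: "e \<in> E" "e' = f ` e" by auto
      then obtain u v where "u \<noteq> v" "e = {u,v}" "u \<in> V" "v \<in> V" using G1.edge2 by blast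
      then show "e' \<in> F" using adj e by auto
    qed
    show "F \<subseteq> (`) f ` E"
    proof
      fix e' assume e': "e' \<in> F"
      then obtain x y where xy: "x \<noteq> y" "e' = {x,y}" "x \<in> W" "y \<in> W" using G2.edge2 by blast
      obtain u where u: "u \<in> V" "x = f u" using xy bij unfolding bij_betw_def by auto
      obtain v where v: "v \<in> V" "y = f v" using xy bij unfolding bij_betw_def by auto
      have "{u,v} \<in> E" using adj u v xy e' by auto
      moreover have "e' = f ` {u,v}" using xy u v by auto
      ultimately show "e' \<in> (`) f ` E" by blast
    qed
  qed
  then show ?thesis using bij unfolding bij_betw_def by blast
qed



locale eqs = cg +
  assumes n5: "card V \<ge> 5"
    and cEq: "card E = card V - 1 + card (cycles E)"
    and NC: "\<forall>e\<in>E - \<Union>(cycles E). \<exists>u v. e = {u,v} \<and> degree E u = card V - 1 \<and> degree E v = 1"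
    and CY: "\<forall>C\<in>cycles E. \<exists>a b c. distinct [a,b,c] \<and> C = {{a,b},{b,c},{c,a}} \<and>
              degree E a = card V - 1 \<and> degree E b = 2 \<and> degree E c = 2"
begin

lemma n12: "card V - 1 \<noteq> 2" "card V - 1 \<noteq> 1" using n5 by auto

lemma exists_center: "\<exists>c\<in>V. degree E c = card V - 1"
proof -
  have "card E > 0" using cEq n5 by linarith
  then have "E \<noteq> {}" by auto
  then obtain e where e: "e \<in> E" by blast
  show ?thesis
  proof (cases "e \<in> \<Union>(cycles E)")
    case True
    then obtain C where C: "C \<in> cycles E" "e \<in> C" by (rule UnionE)
    have ex: "\<exists>a b x. distinct [a,b,x] \<and> C = {{a,b},{b,x},{x,a}} \<and>
              degree E a = card V - 1 \<and> degree E b = 2 \<and> degree E x = 2" using bspec[OF CY C(1)] .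
    then obtain a b x where abx: "C = {{a,b},{b,x},{x,a}}" "degree E a = card V - 1" by blast
    have "{a,b} \<in> C" using abx(1) by simp
    then have "{a,b} \<in> E" using cyc_E[OF C(1)] by blast
    then have "a \<in> V" using pair_V by blast
    then show ?thesis using abx(2) by blast
  next
    case False
    then have "e \<in> E - \<Union>(cycles E)" using e by simp
    then obtain u v where "e = {u,v}" "degree E u = card V - 1" using NC[rule_format] by blast
    moreover then have "u \<in> V" using e pair_V by blast
    ultimately show ?thesis by blast
  qed
qed

definition cen where "cen = (SOME c. c \<in> V \<and> degree E c = card V - 1)"

lemma cen: "cen \<in> V" "degree E cen = card V - 1"
  using someI_ex[OF exists_center[unfolded Bex_def]] unfolding cen_def by auto

lemma full_nbr: assumes "v \<in> V" "degree E v = card V - 1" shows "nbr E v = V - {v}"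
proof (rule card_subset_eq)
  show "finite (V - {v})" using finV by simp
  show "nbr E v \<subseteq> V - {v}" by (rule nbr_sub)
  show "card (nbr E v) = card (V - {v})" using assms degree_nbr finV by simp
qed

lemma cen_nbr: "nbr E cen = V - {cen}" using full_nbr cen by simp

lemma uniq: assumes v: "v \<in> V" "degree E v = card V - 1" shows "v = cen"
proof (rule ccontr)
  assume ne: "v \<noteq> cen"
  have nv: "nbr E v = V - {v}" using full_nbr v by simp
  have sub: "{cen, v} \<subseteq> V" using v cen by simp
  have "card (V - {cen, v}) = card V - 2" using card_Diff_subset[OF _ sub] ne finV by simp
  then have "\<not> card (V - {cen, v}) \<le> Suc 0" using n5 by simp
  then obtain w1 w2 where w: "w1 \<in> V - {cen, v}" "w2 \<in> V - {cen, v}" "w1 \<noteq> w2"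
    using card_le_Suc0_iff_eq[of "V - {cen, v}"] finV by blast
  have tri: "\<And>w. w \<in> V - {cen, v} \<Longrightarrow> cyc [cen, v, w] \<in> cycles E"
  proof -
    fix w assume w: "w \<in> V - {cen, v}"
    have e1: "{cen, v} \<in> E" using cen_nbr v ne unfolding nbr_def by auto
    have e2: "{v, w} \<in> E" using nv w unfolding nbr_def by auto
    have e3: "{w, cen} \<in> E" using cen_nbr w unfolding nbr_def by (auto simp: insert_commute)
    show "cyc [cen, v, w] \<in> cycles E" by (rule tri_cycle[OF e1 e2 e3]) (use w in auto)
  qed
  have U: "\<And>w. \<Union>(cyc [cen, v, w]) = {cen, v, w}" by (subst cyc_Union) auto
  have "cyc [cen, v, w1] = cyc [cen, v, w2]"
    by (rule two_common[OF tri[OF w(1)] tri[OF w(2)] ne[symmetric]]) (simp_all add: U)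
  then have "w2 \<in> \<Union>(cyc [cen, v, w1])" using U by simp
  then show False using w U by simp
qed

lemma cyc_has_cen: assumes C: "C \<in> cycles E"
  shows "\<exists>b x. C = {{cen,b},{b,x},{x,cen}} \<and> distinct [cen,b,x] \<and> degree E b = 2 \<and> degree E x = 2"
proof -
  obtain a b x where abx: "distinct [a,b,x]" "C = {{a,b},{b,x},{x,a}}" "degree E a = card V - 1"
    "degree E b = 2" "degree E x = 2" using bspec[OF CY C] by blast
  have "{a,b} \<in> E" using C abx(2) cyc_E by auto
  then have "a \<in> V" using pair_V by blast
  then have "a = cen" using uniq abx(3) by simp
  then show ?thesis using abx by blast
qed

lemma deg12: assumes v: "v \<in> V" "v \<noteq> cen" shows "degree E v = 1 \<or> degree E v = 2"
proof -
  have e: "{cen, v} \<in> E" using cen_nbr v unfolding nbr_def by auto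
  show ?thesis
  proof (cases "{cen, v} \<in> \<Union>(cycles E)")
    case True
    then obtain C where C: "C \<in> cycles E" "{cen,v} \<in> C" by auto
    then obtain b x where bx: "C = {{cen,b},{b,x},{x,cen}}" "distinct [cen,b,x]" "degree E b = 2" "degree E x = 2"
      using cyc_has_cen by blast
    have "v \<in> {cen, b, x}" using C(2) bx(1) by auto
    then show ?thesis using bx v by auto
  next
    case False
    then have "{cen,v} \<in> E - \<Union>(cycles E)" using e by simp
    then obtain u w where uw: "{cen,v} = {u,w}" "degree E u = card V - 1" "degree E w = 1" using NC[rule_format] by blast
    show ?thesis
    proof (cases "u = cen")
      case True then have "w = v" using uw(1) v by (auto simp: doubleton_eq_iff)
      then show ?thesis using uw by simp
    next
      case False then have "u = v" using uw(1) by (auto simp: doubleton_eq_iff)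
      then have "v = cen" using uniq v uw by simp
      then show ?thesis using v by simp
    qed
  qed
qed

end


context eqs begin

definition T where "T = {v\<in>V. v \<noteq> cen \<and> degree E v = 2}"
definition sig where "sig v = (SOME w. w \<in> nbr E v \<and> w \<noteq> cen)"

lemma cen_in_nbr: "v \<in> V \<Longrightarrow> v \<noteq> cen \<Longrightarrow> cen \<in> nbr E v"
  using cen_nbr nbr_sym by blast

lemma nbr_deg1: assumes "v \<in> V" "v \<noteq> cen" "degree E v = 1" shows "nbr E v = {cen}"
proof -
  have "card (nbr E v) = 1" using assms degree_nbr by simp
  then obtain w where "nbr E v = {w}" by (rule card_1_singletonE)
  then show ?thesis using cen_in_nbr[OF assms(1,2)] by simp
qed

lemma sig: assumes v: "v \<in> T" shows "nbr E v = {cen, sig v}" "sig v \<noteq> cen"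
proof -
  have vV: "v \<in> V" "v \<noteq> cen" "degree E v = 2" using v unfolding T_def by auto
  have c: "cen \<in> nbr E v" using cen_in_nbr vV by simp
  have "card (nbr E v) = 2" using vV degree_nbr by simp
  then have "card (nbr E v - {cen}) = 1" using c fin_nbr by simp
  then obtain w where w: "nbr E v - {cen} = {w}" by (rule card_1_singletonE)
  have "sig v = w" unfolding sig_def
  proof (rule some_equality)
    show "w \<in> nbr E v \<and> w \<noteq> cen" using w by auto
    fix w' assume "w' \<in> nbr E v \<and> w' \<noteq> cen"
    then show "w' = w" using w by auto
  qed
  then show "nbr E v = {cen, sig v}" "sig v \<noteq> cen" using w c by auto
qed

lemma sig_edge: "v \<in> T \<Longrightarrow> {v, sig v} \<in> E"
  using sig(1)[of v] unfolding nbr_def by auto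

lemma sig_V: assumes "v \<in> T" shows "sig v \<in> V" "sig v \<noteq> v"
proof -
  show "sig v \<in> V" using pair_V[OF sig_edge[OF assms]] by simp
  show "sig v \<noteq> v" using pair_ne[OF sig_edge[OF assms]] by simp
qed

lemma sig_T: assumes v: "v \<in> T" shows "sig v \<in> T"
proof -
  have e: "{v, sig v} \<in> E" using sig_edge v .
  have vc: "v \<noteq> cen" using v unfolding T_def by simp
  have sc: "sig v \<noteq> cen" using sig v by simp
  have "degree E (sig v) = 2"
  proof (cases "{v, sig v} \<in> \<Union>(cycles E)")
    case True
    then obtain C where C: "C \<in> cycles E" "{v, sig v} \<in> C" by (rule UnionE)
    obtain b x where bx: "C = {{cen,b},{b,x},{x,cen}}" "distinct [cen,b,x]" "degree E b = 2" "degree E x = 2"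
      using cyc_has_cen[OF C(1)] by blast
    have "{v, sig v} = {b, x}" using C(2) bx(1) vc sc by (auto simp: doubleton_eq_iff)
    then have "sig v = b \<or> sig v = x" by (auto simp: doubleton_eq_iff)
    then show ?thesis using bx by auto
  next
    case False
    then have "{v, sig v} \<in> E - \<Union>(cycles E)" using e by simp
    then have "\<exists>u w. {v, sig v} = {u,w} \<and> degree E u = card V - 1 \<and> degree E w = 1" by (rule bspec[OF NC])
    then obtain u w where uw: "{v, sig v} = {u,w}" "degree E u = card V - 1" by blast
    have "u \<in> {v, sig v}" using uw(1) by simp
    then have "u \<in> V" using pair_V[OF e] by auto
    then have "u = cen" using uniq uw(2) by simp
    then show ?thesis using uw(1) vc sc by (auto simp: doubleton_eq_iff)
  qed
  then show ?thesis unfolding T_def using sig_V[OF v] sc by simp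
qed

lemma sig_sig: assumes v: "v \<in> T" shows "sig (sig v) = v"
proof -
  have "v \<in> nbr E (sig v)" using sig_edge[OF v] unfolding nbr_def by (simp add: insert_commute)
  moreover have "v \<noteq> cen" using v unfolding T_def by simp
  ultimately show ?thesis using sig(1)[OF sig_T[OF v]] by auto
qed

lemma edge_char: assumes "x \<in> V" "y \<in> V"
  shows "{x,y} \<in> E \<longleftrightarrow> x \<noteq> y \<and> (x = cen \<or> y = cen \<or> (x \<in> T \<and> y = sig x))"
proof
  assume e: "{x,y} \<in> E"
  have xy: "x \<noteq> y" using pair_ne e by simp
  show "x \<noteq> y \<and> (x = cen \<or> y = cen \<or> (x \<in> T \<and> y = sig x))"
  proof (cases "x = cen \<or> y = cen")
    case True then show ?thesis using xy by blast
  next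
    case False
    have yn: "y \<in> nbr E x" using e unfolding nbr_def by simp
    have "degree E x = 1 \<or> degree E x = 2" using deg12 assms False by simp
    then have "x \<in> T"
    proof
      assume "degree E x = 1"
      then have "nbr E x = {cen}" using nbr_deg1 assms False by simp
      then show ?thesis using yn False by simp
    qed (use assms False in \<open>simp add: T_def\<close>)
    then have "y = sig x" using sig(1)[of x] yn False by auto
    then show ?thesis using xy \<open>x \<in> T\<close> by simp
  qed
next
  assume h: "x \<noteq> y \<and> (x = cen \<or> y = cen \<or> (x \<in> T \<and> y = sig x))"
  then consider "x = cen" | "y = cen" | "x \<in> T" "y = sig x" by blast
  then show "{x,y} \<in> E"
  proof cases
    case 1
    then have "y \<in> nbr E cen" using cen_nbr assms h by simp
    then show ?thesis using 1 unfolding nbr_def by simp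
  next
    case 2
    then have "x \<in> nbr E cen" using cen_nbr assms h by simp
    then show ?thesis using 2 unfolding nbr_def by (simp add: insert_commute)
  next
    case 3 then show ?thesis using sig_edge by simp
  qed
qed

lemma tri_T: assumes b: "b \<in> T" shows "cyc [cen, b, sig b] \<in> cycles E"
proof (rule tri_cycle)
  have bV: "b \<in> V" "b \<noteq> cen" using b unfolding T_def by auto
  have "b \<in> nbr E cen" using cen_nbr bV by simp
  then show "{cen, b} \<in> E" unfolding nbr_def by simp
  show "{b, sig b} \<in> E" using sig_edge b .
  have "sig b \<in> nbr E cen" using cen_nbr sig_V[OF b] sig(2)[OF b] by simp
  then show "{sig b, cen} \<in> E" unfolding nbr_def by (simp add: insert_commute)
  show "cen \<noteq> sig b" using sig(2)[OF b] by simp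
qed

lemma cyc_tri: assumes C: "C \<in> cycles E" shows "\<exists>b\<in>T. C = cyc [cen, b, sig b]"
proof -
  obtain b x where bx: "C = {{cen,b},{b,x},{x,cen}}" "distinct [cen,b,x]" "degree E b = 2" "degree E x = 2"
    using cyc_has_cen[OF C] by blast
  have "{cen,b} \<in> E" using bx(1) cyc_E[OF C] by auto
  then have bV: "b \<in> V" using pair_V by blast
  moreover have "b \<noteq> cen" using bx(2) by auto
  ultimately have bT: "b \<in> T" using bx(3) unfolding T_def by simp
  have "{b,x} \<in> E" using bx(1) cyc_E[OF C] by auto
  then have "x \<in> nbr E b" unfolding nbr_def by simp
  then have "x = sig b" using sig(1)[OF bT] bx(2) by auto
  then have "C = cyc [cen, b, sig b]" using bx(1) by (simp add: cyc3)
  then show ?thesis using bT by blast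
qed

lemma tri_Union: "\<Union>(cyc [cen, b, sig b]) = {cen, b, sig b}"
  by (subst cyc_Union) auto

end


lemma iso_from_inv: assumes bij: "bij_betw \<phi> W V"
  and adj: "\<forall>i\<in>W. \<forall>j\<in>W. {\<phi> i, \<phi> j} \<in> E \<longleftrightarrow> {i,j} \<in> F"
  shows "graph_iso V E W F"
  unfolding graph_iso_def
proof (intro exI conjI)
  let ?f = "inv_into W \<phi>"
  show "bij_betw ?f V W" using bij_betw_inv_into[OF bij] .
  show "\<forall>u\<in>V. \<forall>v\<in>V. {u, v} \<in> E \<longleftrightarrow> {?f u, ?f v} \<in> F"
  proof (intro ballI)
    fix u v assume u: "u \<in> V" and v: "v \<in> V"
    have fu: "?f u \<in> W" "\<phi> (?f u) = u" using u bij bij_betw_inv_into[OF bij]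
      by (auto simp: bij_betw_def intro: f_inv_into_f)
    have fv: "?f v \<in> W" "\<phi> (?f v) = v" using v bij bij_betw_inv_into[OF bij]
      by (auto simp: bij_betw_def intro: f_inv_into_f)
    show "{u, v} \<in> E \<longleftrightarrow> {?f u, ?f v} \<in> F" using adj fu fv by metis
  qed
qed

context eqs begin

definition fst_of where "fst_of C = (SOME b. b \<in> T \<and> C = cyc [cen, b, sig b])"

lemma fst_of: assumes "C \<in> cycles E" shows "fst_of C \<in> T" "C = cyc [cen, fst_of C, sig (fst_of C)]"
proof -
  have "\<exists>b. b \<in> T \<and> C = cyc [cen, b, sig b]" using cyc_tri[OF assms] by blast
  then have "fst_of C \<in> T \<and> C = cyc [cen, fst_of C, sig (fst_of C)]" unfolding fst_of_def by (rule someI_ex)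
  then show "fst_of C \<in> T" "C = cyc [cen, fst_of C, sig (fst_of C)]" by auto
qed

lemma cenT: "cen \<notin> T" unfolding T_def by simp

lemma T_V: "T \<subseteq> V" unfolding T_def by auto

lemma t2: "2 * card (cycles E) \<le> card V - 1" using main_ineq(1)[OF n5] .

lemma psi_part:
  assumes g: "bij_betw g {0..<card (cycles E)} (cycles E)"
  defines "\<psi> \<equiv> (\<lambda>i. if odd i then fst_of (g ((i-1) div 2)) else sig (fst_of (g ((i-1) div 2))))"
  shows "bij_betw \<psi> {1..2 * card (cycles E)} T"
    and "\<And>i. i \<in> {1..2 * card (cycles E)} \<Longrightarrow> sig (\<psi> i) = \<psi> (pn i)"
proof -
  let ?t = "card (cycles E)"
  define b where "b = (\<lambda>j. fst_of (g j))"
  have gj: "\<And>j. j < ?t \<Longrightarrow> g j \<in> cycles E" using g unfolding bij_betw_def by auto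
  have bT: "\<And>j. j < ?t \<Longrightarrow> b j \<in> T" unfolding b_def using fst_of(1) gj by blast
  have gb: "\<And>j. j < ?t \<Longrightarrow> g j = cyc [cen, b j, sig (b j)]" unfolding b_def using fst_of(2) gj by blast
  have jlt: "\<And>i. i \<in> {1..2*?t} \<Longrightarrow> (i-1) div 2 < ?t" by auto
  have psi_b: "\<And>i. \<psi> i = (if odd i then b ((i-1) div 2) else sig (b ((i-1) div 2)))"
    unfolding \<psi>_def b_def by simp
  have psiT: "\<And>i. i \<in> {1..2*?t} \<Longrightarrow> \<psi> i \<in> T"
    using bT sig_T jlt unfolding psi_b by auto
  have psiU: "\<And>i. i \<in> {1..2*?t} \<Longrightarrow> \<psi> i \<in> \<Union>(g ((i-1) div 2))"
    using gb jlt tri_Union unfolding psi_b by auto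
  show sp: "\<And>i. i \<in> {1..2*?t} \<Longrightarrow> sig (\<psi> i) = \<psi> (pn i)"
  proof -
    fix i assume i: "i \<in> {1..2*?t}"
    show "sig (\<psi> i) = \<psi> (pn i)"
    proof (cases "odd i")
      case True
      then have "pn i = i + 1" "even (pn i)" "(pn i - 1) div 2 = (i - 1) div 2" unfolding pn_def by presburger+
      then show ?thesis unfolding psi_b using True by simp
    next
      case False
      then have "pn i = i - 1" "odd (pn i)" "(pn i - 1) div 2 = (i - 1) div 2" using i unfolding pn_def by auto presburger+
      then show ?thesis unfolding psi_b using False sig_sig bT jlt[OF i] by simp
    qed
  qed
  have inj: "inj_on \<psi> {1..2*?t}"
  proof (rule inj_onI)
    fix i i' assume i: "i \<in> {1..2*?t}" and i': "i' \<in> {1..2*?t}" and e: "\<psi> i = \<psi> i'"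
    define j where "j = (i-1) div 2"
    define j' where "j' = (i'-1) div 2"
    have jj: "j = j'"
    proof (rule ccontr)
      assume ne: "j \<noteq> j'"
      have neq: "g j \<noteq> g j'" using ne g jlt[OF i] jlt[OF i'] unfolding bij_betw_def inj_on_def j_def j'_def by auto
      have gjc: "g j \<in> cycles E" "g j' \<in> cycles E" using gj jlt i i' unfolding j_def j'_def by blast+
      have "g j = g j'"
      proof (rule two_common[OF gjc])
        show "cen \<noteq> \<psi> i" using psiT[OF i] cenT by auto
        show "cen \<in> \<Union>(g j)" "cen \<in> \<Union>(g j')" using gb jlt i i' tri_Union unfolding j_def j'_def by auto
        show "\<psi> i \<in> \<Union>(g j)" using psiU[OF i] unfolding j_def .
        show "\<psi> i \<in> \<Union>(g j')" using psiU[OF i'] e unfolding j'_def by simp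
      qed
      then show False using neq by simp
    qed
    have nsig: "\<And>k. k < ?t \<Longrightarrow> b k \<noteq> sig (b k)" using sig_V bT by metis
    have "odd i = odd i'"
    proof (rule ccontr)
      assume "odd i \<noteq> odd i'"
      then show False using e jj nsig[OF jlt[OF i]] unfolding psi_b j_def j'_def by (auto split: if_splits)
    qed
    moreover have "1 \<le> i" "1 \<le> i'" using i i' by auto
    ultimately show "i = i'" using jj unfolding j_def j'_def by presburger
  qed
  have im: "\<psi> ` {1..2*?t} = T"
  proof
    show "\<psi> ` {1..2*?t} \<subseteq> T" using psiT by blast
    show "T \<subseteq> \<psi> ` {1..2*?t}"
    proof
      fix v assume v: "v \<in> T"
      have "cyc [cen, v, sig v] \<in> g ` {0..<?t}" using tri_T[OF v] g unfolding bij_betw_def by simp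
      then obtain j where j: "j < ?t" "g j = cyc [cen, v, sig v]" by (metis atLeastLessThan_iff imageE)
      have "{cen, v, sig v} = {cen, b j, sig (b j)}" using gb[OF j(1)] j(2) tri_Union by metis
      moreover have "v \<noteq> cen" using v cenT by auto
      ultimately have "v = b j \<or> v = sig (b j)" by auto
      then show "v \<in> \<psi> ` {1..2*?t}"
      proof
        assume "v = b j"
        moreover have "\<psi> (2*j+1) = b j" unfolding psi_b by simp
        moreover have "2*j+1 \<in> {1..2*?t}" using j by auto
        ultimately show ?thesis by (metis image_eqI)
      next
        assume "v = sig (b j)"
        moreover have "\<psi> (2*j+2) = sig (b j)" unfolding psi_b by simp
        moreover have "2*j+2 \<in> {1..2*?t}" using j by auto
        ultimately show ?thesis by (metis image_eqI)
      qed
    qed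
  qed
  show "bij_betw \<psi> {1..2 * card (cycles E)} T" unfolding bij_betw_def using inj im by simp
qed

end


context eqs begin

lemma eq_iso: "graph_iso V E (H_vertices (card V)) (H_edges (card V) (card (cycles E)))"
proof -
  define n where "n = card V"
  define t where "t = card (cycles E)"
  have t2': "2*t \<le> n - 1" using t2 unfolding n_def t_def .
  obtain g where g: "bij_betw g {0..<t} (cycles E)" using ex_bij_betw_nat_finite[OF cycles_fin] unfolding t_def by blast
  define \<psi> where "\<psi> = (\<lambda>i. if odd i then fst_of (g ((i-1) div 2)) else sig (fst_of (g ((i-1) div 2))))"
  have psib: "bij_betw \<psi> {1..2*t} T" using psi_part(1)[OF g[unfolded t_def]] unfolding \<psi>_def t_def .
  have psis: "\<And>i. i \<in> {1..2*t} \<Longrightarrow> sig (\<psi> i) = \<psi> (pn i)" using psi_part(2)[OF g[unfolded t_def]] unfolding \<psi>_def t_def by blast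
  have cT: "card T = 2*t" using bij_betw_same_card[OF psib] by simp
  define Q where "Q = V - ({cen} \<union> T)"
  have finT: "finite T" using T_V finV finite_subset by blast
  have sub: "{cen} \<union> T \<subseteq> V" using cen T_V by auto
  have cQ: "card Q = n - (2*t + 1)"
  proof -
    have "card ({cen} \<union> T) = 2*t + 1" using cT cenT finT by simp
    then show ?thesis unfolding Q_def n_def using card_Diff_subset[OF _ sub] finT by simp
  qed
  obtain h where h: "bij_betw h {2*t+1..<n} Q"
  proof -
    have "card {2*t+1..<n} = card Q" using cQ by simp
    moreover have "finite Q" unfolding Q_def using finV by simp
    ultimately show ?thesis using bij_betw_iff_card[of "{2*t+1..<n}" Q] that by auto
  qed
  define \<phi> where "\<phi> = (\<lambda>i. if i = 0 then cen else if i \<le> 2*t then \<psi> i else h i)"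
  have b1: "bij_betw \<phi> {0} {cen}" unfolding \<phi>_def by (simp add: bij_betw_def)
  have b2: "bij_betw \<phi> {1..2*t} T" using psib by (subst bij_betw_cong[of _ _ \<psi>]) (auto simp: \<phi>_def)
  have b3: "bij_betw \<phi> {2*t+1..<n} Q" using h by (subst bij_betw_cong[of _ _ h]) (auto simp: \<phi>_def)
  have b12: "bij_betw \<phi> ({0} \<union> {1..2*t}) ({cen} \<union> T)" by (rule bij_betw_combine[OF b1 b2]) (use cenT in auto)
  have b123: "bij_betw \<phi> (({0} \<union> {1..2*t}) \<union> {2*t+1..<n}) (({cen} \<union> T) \<union> Q)"
    by (rule bij_betw_combine[OF b12 b3]) (auto simp: Q_def)
  have n0: "0 < n" using n5 unfolding n_def by simp
  have dom: "({0} \<union> {1..2*t}) \<union> {2*t+1..<n} = {0..<n}" using t2' n0 by auto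
  have cod: "({cen} \<union> T) \<union> Q = V" using sub unfolding Q_def by auto
  have bij: "bij_betw \<phi> {0..<n} V" using b123 unfolding dom cod .
  have inj: "inj_on \<phi> {0..<n}" using bij unfolding bij_betw_def by simp
  have phiV: "\<And>i. i < n \<Longrightarrow> \<phi> i \<in> V" using bij unfolding bij_betw_def by auto
  have phi0: "\<phi> 0 = cen" unfolding \<phi>_def by simp
  have cen_iff: "\<And>i. i < n \<Longrightarrow> \<phi> i = cen \<longleftrightarrow> i = 0"
    using inj phi0 n0 unfolding inj_on_def by auto
  have T_iff: "\<And>i. i < n \<Longrightarrow> \<phi> i \<in> T \<longleftrightarrow> 1 \<le> i \<and> i \<le> 2*t"
  proof -
    fix i assume i: "i < n"
    show "\<phi> i \<in> T \<longleftrightarrow> 1 \<le> i \<and> i \<le> 2*t"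
    proof (cases "1 \<le> i \<and> i \<le> 2*t")
      case True then show ?thesis using b2 unfolding bij_betw_def by auto
    next
      case False
      then have "i = 0 \<or> i \<in> {2*t+1..<n}" using i by auto
      then have "\<phi> i = cen \<or> \<phi> i \<in> Q" using b3 phi0 unfolding bij_betw_def by auto
      then show ?thesis using False cenT unfolding Q_def by auto
    qed
  qed
  have adj: "\<forall>i\<in>{0..<n}. \<forall>j\<in>{0..<n}. {\<phi> i, \<phi> j} \<in> E \<longleftrightarrow> {i,j} \<in> H_edges n t"
  proof (intro ballI)
    fix i j assume i: "i \<in> {0..<n}" and j: "j \<in> {0..<n}"
    have ne: "\<phi> i \<noteq> \<phi> j \<longleftrightarrow> i \<noteq> j" using inj i j unfolding inj_on_def by auto
    have sg: "1 \<le> i \<and> i \<le> 2*t \<Longrightarrow> (\<phi> j = sig (\<phi> i) \<longleftrightarrow> j = pn i)"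
    proof -
      assume ii: "1 \<le> i \<and> i \<le> 2*t"
      have s: "sig (\<phi> i) = \<phi> (pn i)" using psis[of i] ii unfolding \<phi>_def using pn_props[of i t]
        by auto
      have "pn i \<in> {0..<n}" using pn_props(2)[of i t] ii t2' by auto
      then show "\<phi> j = sig (\<phi> i) \<longleftrightarrow> j = pn i" unfolding s using inj j unfolding inj_on_def by auto
    qed
    have "{\<phi> i, \<phi> j} \<in> E \<longleftrightarrow> \<phi> i \<noteq> \<phi> j \<and> (\<phi> i = cen \<or> \<phi> j = cen \<or> (\<phi> i \<in> T \<and> \<phi> j = sig (\<phi> i)))"
      using edge_char phiV i j by simp
    also have "\<dots> \<longleftrightarrow> i \<noteq> j \<and> (i = 0 \<or> j = 0 \<or> (1 \<le> i \<and> i \<le> 2*t \<and> j = pn i))"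
      using ne cen_iff T_iff sg i j by auto
    also have "\<dots> \<longleftrightarrow> {i,j} \<in> H_edges n t" using H_mem[OF t2'] i j by simp
    finally show "{\<phi> i, \<phi> j} \<in> E \<longleftrightarrow> {i,j} \<in> H_edges n t" .
  qed
  show ?thesis unfolding H_vertices_def n_def[symmetric] t_def[symmetric]
    by (rule iso_from_inv[OF bij adj])
qed

end


lemma sqrt8: "sqrt 8 = 2 * sqrt 2"
proof -
  have "sqrt 8 = sqrt (2^2 * 2)" by simp
  also have "\<dots> = sqrt (2^2) * sqrt 2" by (rule real_sqrt_mult)
  also have "\<dots> = 2 * sqrt 2" by simp
  finally show ?thesis .
qed

theorem theorem3p1:
  fixes V :: "'a set" and E :: "'a set set" and n t :: nat
  assumes "n \<ge> 5"
    and "cactus V E"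
    and "card V = n"
    and "card (cycles E) = t"
  shows "sombor E \<le> real (n - 2*t - 1) * sqrt ((real n - 1)\<^sup>2 + 1)
              + 2 * real t * sqrt ((real n - 1)\<^sup>2 + 4) + 2 * sqrt 2 * real t \<and>
         (sombor E = real (n - 2*t - 1) * sqrt ((real n - 1)\<^sup>2 + 1)
              + 2 * real t * sqrt ((real n - 1)\<^sup>2 + 4) + 2 * sqrt 2 * real t
         \<longleftrightarrow> graph_iso V E (H_vertices n) (H_edges n t))"
proof -
  have sg: "simple_graph V E" using assms(2) unfolding cactus_def by simp
  interpret cg V E by (intro cg.intro sg.intro cg_axioms.intro sg assms(2))
  have n5: "card V \<ge> 5" using assms by simp
  have t2: "2 * t \<le> n - 1" using main_ineq(1)[OF n5] assms by simp
  define R where "R = real (n - 2*t - 1) * sqrt ((real n - 1)\<^sup>2 + 1)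
              + 2 * real t * sqrt ((real n - 1)\<^sup>2 + 4) + 2 * sqrt 2 * real t"
  have le: "2*t + 1 \<le> n" using t2 assms(1) by linarith
  have "n - 2*t - 1 = n - (2*t + 1)" by simp
  then have Rn: "real (n - 2*t - 1) = real n - 1 - 2 * real t" using le by (simp add: of_nat_diff)
  have "n - 1 - 2*t = n - (2*t + 1)" by simp
  then have Rn2: "real (n - 1 - 2*t) = real n - 1 - 2 * real t" using le by (simp add: of_nat_diff)
  have BBn: "BB n = sqrt ((real n - 1)\<^sup>2 + 1)" unfolding BB_def ff_def by simp
  have AAn: "AA n = sqrt ((real n - 1)\<^sup>2 + 4)" unfolding AA_def ff_def by simp
  have R': "R = (real n - 1 - 2 * real t) * BB n + real t * (2 * AA n + sqrt 8)"
    unfolding R_def Rn BBn AAn sqrt8 by (simp add: algebra_simps)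
  have ineq: "sombor E \<le> R" unfolding R' using main_ineq(2)[OF n5] assms by simp
  have "sombor E = R \<longleftrightarrow> graph_iso V E (H_vertices n) (H_edges n t)"
  proof
    assume "sombor E = R"
    then have "sombor E = (real (card V) - 1 - 2 * real (card (cycles E))) * BB (card V)
            + real (card (cycles E)) * (2 * AA (card V) + sqrt 8)" unfolding R' using assms by simp
    note st = main_ineq(3)[OF n5 this]
    interpret eqs V E
      by (intro eqs.intro eqs_axioms.intro cg.intro sg.intro cg_axioms.intro sg assms(2) n5)
         (use st in blast)+
    show "graph_iso V E (H_vertices n) (H_edges n t)" using eq_iso assms by simp
  next
    assume iso: "graph_iso V E (H_vertices n) (H_edges n t)"
    have sgH: "simple_graph (H_vertices n) (H_edges n t)" unfolding H_vertices_def using H_sg[OF t2] .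
    obtain f where f: "inj_on f V" "(`) f ` E = H_edges n t" using iso_image[OF sg sgH iso] by blast
    have "sombor E = sombor (H_edges n t)" using sombor_inj[OF sg f(1)] f(2) by simp
    also have "\<dots> = real (2*t) * AA n + real (n - 1 - 2*t) * BB n + real t * sqrt 8" using H_sombor[OF t2] .
    also have "\<dots> = R" unfolding R' Rn2 by (simp add: algebra_simps)
    finally show "sombor E = R" .
  qed
  then show ?thesis using ineq unfolding R_def by simp
qed

end
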